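(* Let $E,F$ be vector lattices with $F$ Dedekind complete, and let $A\subset\mathcal{U}_{+}(E,F)$ be an increasing set. Then for every $T\in\mathcal{U}_{+}(E,F)$ and every $e\in E$, $$\sigma_{A}T(e)=\inf_{\varepsilon>0,\ S\in A}\ \sup\bigl\{\rho\, T(f):\ f\in\mathcal{F}_{e},\ \rho\in\mathfrak{B}(F),\ \rho\, S(f)\leq\varepsilon\, S(e)\bigr\}.$$
   Context: For vector lattices $E,F$, an operator (not necessarily linear) $T:E\to F$ is orthogonally additive if $T(x+y)=T(x)+T(y)$ whenever $x\perp y$; it is positive if $T(x)\geq 0$ for all $x\in E$; it is order bounded if it maps order bounded sets to order bounded sets. An orthogonally additive order bounded operator is an abstract Uryson operator; $\mathcal{U}(E,F)$ denotes the space of all of them, $\mathcal{U}_{+}(E,F)$ the positive ones, ordered by $S\leq T$ iff $T-S$ is positive; for $F$ Dedekind complete, $\mathcal{U}(E,F)$ is a Dedekind complete vector lattice. A fragment of $x\in E$ is $z\in E$ with $z\perp(x-z)$; $\mathcal{F}_{x}$ is the set of fragments of $x$. $\mathfrak{B}(F)$ is the Boolean algebra of band projections on $F$. For $A\subset\mathcal{U}(E,F)$, $\pi_{A}$ denotes the band projection in $\mathcal{U}(E,F)$ onto the band $\{A\}^{\perp\perp}$ generated by $A$, and $\sigma_{A}=I-\pi_{A}$. A set $A\subset\mathcal{U}_{+}(E,F)$ is increasing if for all $S,T\in A$ there is $Q\in A$ with $S\leq Q$ and $T\leq Q$. *)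

theory Defs
  imports Complex_Main
begin

text \<open>Vector lattices are modelled as types of class ordered_real_vector + lattice;
a Dedekind complete vector lattice additionally carries class conditionally_complete_lattice.\<close>

definition vl_abs :: "'a::{ordered_ab_group_add,lattice} \<Rightarrow> 'a" where
  "vl_abs x = sup x (- x)"

definition vl_disj :: "'a::{ordered_ab_group_add,lattice} \<Rightarrow> 'a \<Rightarrow> bool" where
  "vl_disj x y \<longleftrightarrow> inf (vl_abs x) (vl_abs y) = 0"

definition fragments :: "'a::{ordered_ab_group_add,lattice} \<Rightarrow> 'a set" where
  "fragments x = {z. vl_disj z (x - z)}"

definition orth_additive :: "('a::{ordered_ab_group_add,lattice} \<Rightarrow> 'b::ab_group_add) \<Rightarrow> bool" where
  "orth_additive T \<longleftrightarrow> (\<forall>x y. vl_disj x y \<longrightarrow> T (x + y) = T x + T y)"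

definition order_bounded_set :: "'a::order set \<Rightarrow> bool" where
  "order_bounded_set X \<longleftrightarrow> (\<exists>a b. X \<subseteq> {a..b})"

definition order_bounded_op :: "('a::order \<Rightarrow> 'b::order) \<Rightarrow> bool" where
  "order_bounded_op T \<longleftrightarrow> (\<forall>X. order_bounded_set X \<longrightarrow> order_bounded_set (T ` X))"

definition uryson :: "('a::{ordered_real_vector,lattice} \<Rightarrow> 'b::{ordered_real_vector,lattice}) \<Rightarrow> bool" where
  "uryson T \<longleftrightarrow> orth_additive T \<and> order_bounded_op T"

definition positive_op :: "('a \<Rightarrow> 'b::{zero,order}) \<Rightarrow> bool" where
  "positive_op T \<longleftrightarrow> (\<forall>x. 0 \<le> T x)"

definition U_plus :: "('a::{ordered_real_vector,lattice} \<Rightarrow> 'b::{ordered_real_vector,lattice}) set" where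
  "U_plus = {T. uryson T \<and> positive_op T}"

definition U_le :: "('a \<Rightarrow> 'b::{ordered_ab_group_add}) \<Rightarrow> ('a \<Rightarrow> 'b) \<Rightarrow> bool" where
  "U_le S T \<longleftrightarrow> positive_op (\<lambda>x. T x - S x)"

definition U_sup :: "('a::{ordered_real_vector,lattice} \<Rightarrow> 'b::{ordered_real_vector,lattice})
    \<Rightarrow> ('a \<Rightarrow> 'b) \<Rightarrow> ('a \<Rightarrow> 'b)" where
  "U_sup S T = (THE R. uryson R \<and> U_le S R \<and> U_le T R \<and>
      (\<forall>Q. uryson Q \<and> U_le S Q \<and> U_le T Q \<longrightarrow> U_le R Q))"

definition U_inf :: "('a::{ordered_real_vector,lattice} \<Rightarrow> 'b::{ordered_real_vector,lattice})
    \<Rightarrow> ('a \<Rightarrow> 'b) \<Rightarrow> ('a \<Rightarrow> 'b)" where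
  "U_inf S T = (THE R. uryson R \<and> U_le R S \<and> U_le R T \<and>
      (\<forall>Q. uryson Q \<and> U_le Q S \<and> U_le Q T \<longrightarrow> U_le Q R))"

definition U_abs :: "('a::{ordered_real_vector,lattice} \<Rightarrow> 'b::{ordered_real_vector,lattice})
    \<Rightarrow> ('a \<Rightarrow> 'b)" where
  "U_abs S = U_sup S (\<lambda>x. - S x)"

definition U_disj :: "('a::{ordered_real_vector,lattice} \<Rightarrow> 'b::{ordered_real_vector,lattice})
    \<Rightarrow> ('a \<Rightarrow> 'b) \<Rightarrow> bool" where
  "U_disj S R \<longleftrightarrow> U_inf (U_abs S) (U_abs R) = (\<lambda>x. 0)"

definition U_dcompl :: "('a::{ordered_real_vector,lattice} \<Rightarrow> 'b::{ordered_real_vector,lattice}) set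
    \<Rightarrow> ('a \<Rightarrow> 'b) set" where
  "U_dcompl X = {R. uryson R \<and> (\<forall>S\<in>X. U_disj S R)}"

definition U_band_gen :: "('a::{ordered_real_vector,lattice} \<Rightarrow> 'b::{ordered_real_vector,lattice}) set
    \<Rightarrow> ('a \<Rightarrow> 'b) set" where
  "U_band_gen X = U_dcompl (U_dcompl X)"

definition pi_A :: "('a::{ordered_real_vector,lattice} \<Rightarrow> 'b::{ordered_real_vector,lattice}) set
    \<Rightarrow> ('a \<Rightarrow> 'b) \<Rightarrow> ('a \<Rightarrow> 'b)" where
  "pi_A A T = (THE Q. Q \<in> U_band_gen A \<and> (\<lambda>x. T x - Q x) \<in> U_dcompl (U_band_gen A))"

definition sigma_A :: "('a::{ordered_real_vector,lattice} \<Rightarrow> 'b::{ordered_real_vector,lattice}) set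
    \<Rightarrow> ('a \<Rightarrow> 'b) \<Rightarrow> ('a \<Rightarrow> 'b)" where
  "sigma_A A T = (\<lambda>x. T x - pi_A A T x)"

definition increasing_set :: "('a \<Rightarrow> 'b::{ordered_ab_group_add}) set \<Rightarrow> bool" where
  "increasing_set A \<longleftrightarrow> (\<forall>S\<in>A. \<forall>T\<in>A. \<exists>Q\<in>A. U_le S Q \<and> U_le T Q)"

definition vl_ideal :: "'b::{ordered_real_vector,lattice} set \<Rightarrow> bool" where
  "vl_ideal B \<longleftrightarrow> 0 \<in> B \<and> (\<forall>x\<in>B. \<forall>y\<in>B. x + y \<in> B) \<and> (\<forall>c x. x \<in> B \<longrightarrow> c *\<^sub>R x \<in> B)
     \<and> (\<forall>x y. y \<in> B \<and> vl_abs x \<le> vl_abs y \<longrightarrow> x \<in> B)"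

definition is_lub_of :: "'b::order set \<Rightarrow> 'b \<Rightarrow> bool" where
  "is_lub_of D s \<longleftrightarrow> (\<forall>d\<in>D. d \<le> s) \<and> (\<forall>u. (\<forall>d\<in>D. d \<le> u) \<longrightarrow> s \<le> u)"

definition vl_band :: "'b::{ordered_real_vector,lattice} set \<Rightarrow> bool" where
  "vl_band B \<longleftrightarrow> vl_ideal B \<and> (\<forall>D s. D \<subseteq> B \<and> is_lub_of D s \<longrightarrow> s \<in> B)"

definition vl_dcompl :: "'b::{ordered_real_vector,lattice} set \<Rightarrow> 'b set" where
  "vl_dcompl B = {y. \<forall>x\<in>B. vl_disj x y}"

definition band_projection :: "('b::{ordered_real_vector,lattice} \<Rightarrow> 'b) \<Rightarrow> bool" where
  "band_projection \<rho> \<longleftrightarrow> (\<exists>B. vl_band B \<and> (\<forall>x. \<rho> x \<in> B \<and> x - \<rho> x \<in> vl_dcompl B))"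

end

theory Submission
  imports Defs "HOL-Library.Lattice_Algebras"
begin


interpretation LG: lattice_ab_group_add "(+)" "0::'a::{ordered_ab_group_add,lattice}" "(-)" uminus "(\<le>)" "(<)" inf sup
  by unfold_locales

definition pp :: "'a::{ordered_ab_group_add,lattice} \<Rightarrow> 'a" where "pp x = sup x 0"
definition nn :: "'a::{ordered_ab_group_add,lattice} \<Rightarrow> 'a" where "nn x = sup (- x) 0"

fun nmul :: "nat \<Rightarrow> 'a::ab_group_add \<Rightarrow> 'a" where
  "nmul 0 x = 0" | "nmul (Suc n) x = x + nmul n x"

lemma abs_ge_self: "(x::'a::{ordered_ab_group_add,lattice}) \<le> vl_abs x" "- x \<le> vl_abs x"
  by (simp_all add: vl_abs_def)

lemma abs_ge0: "0 \<le> vl_abs (x::'a::{ordered_ab_group_add,lattice})"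
proof -
  have "x + (- x) \<le> vl_abs x + vl_abs x" using abs_ge_self[of x] by (rule add_mono)
  then show ?thesis by simp
qed

lemma abs_neg[simp]: "vl_abs (- (x::'a::{ordered_ab_group_add,lattice})) = vl_abs x"
  by (simp add: vl_abs_def sup_commute)

lemma abs_pos: "0 \<le> (x::'a::{ordered_ab_group_add,lattice}) \<Longrightarrow> vl_abs x = x"
proof -
  assume "0 \<le> x"
  then have "- x \<le> x" using order_trans[of "-x" 0 x] by simp
  then show ?thesis unfolding vl_abs_def by (rule sup.absorb1)
qed

lemma abs_leI: "(x::'a::{ordered_ab_group_add,lattice}) \<le> c \<Longrightarrow> - x \<le> c \<Longrightarrow> vl_abs x \<le> c"
  by (simp add: vl_abs_def)

lemma abs_zero_iff: "vl_abs (x::'a::{ordered_ab_group_add,lattice}) = 0 \<longleftrightarrow> x = 0"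
  unfolding vl_abs_def by (rule LG.sup_0_eq_0)

lemma abs_0[simp]: "vl_abs (0::'a::{ordered_ab_group_add,lattice}) = 0"
  by (simp add: abs_zero_iff)

lemma pp_ge0: "0 \<le> pp (x::'a::{ordered_ab_group_add,lattice})" and nn_ge0: "0 \<le> nn x"
  by (simp_all add: pp_def nn_def)

lemma pp_nn: "pp x - nn x = (x::'a::{ordered_ab_group_add,lattice})"
proof -
  have "nn x = - inf x 0" by (simp add: nn_def LG.neg_inf_eq_sup)
  then have "pp x - nn x = sup x 0 + inf x 0" by (simp add: pp_def)
  also have "\<dots> = x + 0" by (rule LG.add_eq_inf_sup[symmetric])
  finally show ?thesis by simp
qed

lemma abs_pp_nn: "vl_abs x = pp x + nn (x::'a::{ordered_ab_group_add,lattice})"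
proof -
  have "pp x + nn x = sup (x + nn x) (nn x)" by (simp add: pp_def LG.add_sup_distrib_right)
  also have "x + nn x = sup 0 x" by (simp add: nn_def LG.add_sup_distrib_left)
  also have "sup (sup 0 x) (nn x) = sup (vl_abs x) 0" by (simp add: nn_def vl_abs_def sup_aci)
  also have "\<dots> = vl_abs x" using abs_ge0[of x] by (simp add: sup.absorb1)
  finally show ?thesis by simp
qed

lemma pp_le_abs: "pp x \<le> vl_abs (x::'a::{ordered_ab_group_add,lattice})"
  unfolding abs_pp_nn[of x] by (rule add_increasing2[OF nn_ge0 order_refl])

lemma nn_le_abs: "nn x \<le> vl_abs (x::'a::{ordered_ab_group_add,lattice})"
  unfolding abs_pp_nn[of x] by (rule add_increasing[OF pp_ge0 order_refl])

lemma abs_triangle: "vl_abs (a + b) \<le> vl_abs a + vl_abs (b::'a::{ordered_ab_group_add,lattice})"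
proof (rule abs_leI)
  show "a + b \<le> vl_abs a + vl_abs b" by (rule add_mono[OF abs_ge_self(1) abs_ge_self(1)])
  have "- a + - b \<le> vl_abs a + vl_abs b" by (rule add_mono[OF abs_ge_self(2) abs_ge_self(2)])
  then show "- (a + b) \<le> vl_abs a + vl_abs b" by (simp add: add.commute)
qed

lemma abs_diff_le: "vl_abs (a - b) \<le> vl_abs a + vl_abs (b::'a::{ordered_ab_group_add,lattice})"
  using abs_triangle[of a "-b"] by simp

lemma riesz:
  fixes x y z :: "'a::{ordered_ab_group_add,lattice}"
  assumes "0 \<le> x" "0 \<le> y" "0 \<le> z"
  shows "inf x (y + z) \<le> inf x y + inf x z"
proof -
  let ?t = "inf x (y + z)"
  have "?t - inf x y = ?t + sup (- x) (- y)"
    by (simp only: diff_conv_add_uminus LG.neg_inf_eq_sup)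
  also have "\<dots> = sup (?t + - x) (?t + - y)" by (rule LG.add_sup_distrib_left)
  finally have e: "?t - inf x y = sup (?t - x) (?t - y)" by (simp only: diff_conv_add_uminus)
  have z0: "0 \<le> inf x z" using assms by simp
  have "?t - x \<le> 0" by simp
  then have 1: "?t - x \<le> inf x z" using z0 by (rule order_trans)
  have 2: "?t - y \<le> inf x z"
  proof (rule le_infI)
    have "?t \<le> ?t + y" using assms(2) by (simp only: le_add_same_cancel1)
    then have "?t - y \<le> ?t" by (simp only: diff_le_eq)
    also have "?t \<le> x" by simp
    finally show "?t - y \<le> x" .
    have "?t \<le> y + z" by simp
    then show "?t - y \<le> z" by (simp add: diff_le_eq add.commute)
  qed
  have "?t - inf x y \<le> inf x z" unfolding e using 1 2 by (rule le_supI)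
  then have "?t \<le> inf x z + inf x y" by (simp only: diff_le_eq)
  then show ?thesis by (simp only: add.commute)
qed

lemma inf_nonneg: "0 \<le> a \<Longrightarrow> 0 \<le> b \<Longrightarrow> 0 \<le> inf (a::'a::{ordered_ab_group_add,lattice}) b"
  by simp

lemma disj_sym: "vl_disj x y \<longleftrightarrow> vl_disj y x"
  by (simp add: vl_disj_def inf_commute)

lemma disj_0[simp]: "vl_disj x 0"
  unfolding vl_disj_def using abs_ge0[of x] by (simp add: inf.absorb2)

lemma disj_0'[simp]: "vl_disj 0 x"
  unfolding vl_disj_def using abs_ge0[of x] by (simp add: inf.absorb1)

lemma disj_solid: "vl_disj x y \<Longrightarrow> vl_abs z \<le> vl_abs y \<Longrightarrow> vl_disj x (z::'a::{ordered_ab_group_add,lattice})"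
proof -
  assume a: "vl_disj x y" "vl_abs z \<le> vl_abs y"
  have h: "inf (vl_abs x) (vl_abs z) \<le> inf (vl_abs x) (vl_abs y)" by (rule inf_mono[OF order_refl a(2)])
  have "inf (vl_abs x) (vl_abs z) \<le> 0" using h by (simp only: a(1)[unfolded vl_disj_def])
  moreover have "0 \<le> inf (vl_abs x) (vl_abs z)" by (intro inf_nonneg abs_ge0)
  ultimately show ?thesis unfolding vl_disj_def by (rule order.antisym)
qed

lemma disj_solid_pos: "vl_disj x y \<Longrightarrow> 0 \<le> z \<Longrightarrow> z \<le> vl_abs y \<Longrightarrow> vl_disj x (z::'a::{ordered_ab_group_add,lattice})"
  by (simp add: abs_pos disj_solid)

lemma disj_add: "vl_disj x y \<Longrightarrow> vl_disj x z \<Longrightarrow> vl_disj x (y + z::'a::{ordered_ab_group_add,lattice})"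
proof -
  assume a: "vl_disj x y" "vl_disj x z"
  have "inf (vl_abs x) (vl_abs (y + z)) \<le> inf (vl_abs x) (vl_abs y + vl_abs z)"
    using abs_triangle by (intro inf_mono) simp_all
  also have "\<dots> \<le> inf (vl_abs x) (vl_abs y) + inf (vl_abs x) (vl_abs z)"
    by (rule riesz) (simp_all add: abs_ge0)
  also have "\<dots> = 0" using a by (simp add: vl_disj_def)
  finally have "inf (vl_abs x) (vl_abs (y + z)) \<le> 0" .
  moreover have "0 \<le> inf (vl_abs x) (vl_abs (y + z))" by (intro inf_nonneg abs_ge0)
  ultimately show ?thesis unfolding vl_disj_def by (rule order.antisym)
qed

lemma disj_neg: "vl_disj x (- y) \<longleftrightarrow> vl_disj x (y::'a::{ordered_ab_group_add,lattice})"
  by (simp add: vl_disj_def)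

lemma disj_diff: "vl_disj x y \<Longrightarrow> vl_disj x z \<Longrightarrow> vl_disj x (y - z::'a::{ordered_ab_group_add,lattice})"
proof -
  assume a: "vl_disj x y" "vl_disj x z"
  then have "vl_disj x (- z)" by (simp only: disj_neg)
  with a(1) have "vl_disj x (y + - z)" by (rule disj_add)
  then show ?thesis by (simp only: diff_conv_add_uminus)
qed

lemma disj_self: "vl_disj x x \<Longrightarrow> x = (0::'a::{ordered_ab_group_add,lattice})"
  by (simp add: vl_disj_def abs_zero_iff)

lemma disj_pos_sum_sup:
  fixes p q :: "'a::{ordered_ab_group_add,lattice}"
  assumes "inf p q = 0" shows "p + q = sup p q"
  using LG.add_eq_inf_sup[of p q] assms by simp

lemma nmul_real: "nmul n x = real n *\<^sub>R (x::'a::real_vector)"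
  by (induction n) (simp_all add: algebra_simps)

lemma nmul_add: "nmul n (x + y) = nmul n x + nmul n (y::'a::ab_group_add)"
  by (induction n) (simp_all add: algebra_simps)

lemma nmul_diff: "nmul n (x - y) = nmul n x - nmul n (y::'a::ab_group_add)"
  by (induction n) (simp_all add: algebra_simps)

lemma nmul_mono: "x \<le> y \<Longrightarrow> nmul n x \<le> nmul n (y::'a::ordered_ab_group_add)"
  by (induction n) (simp_all add: add_mono)

lemma nmul_nonneg: "0 \<le> x \<Longrightarrow> 0 \<le> nmul n (x::'a::ordered_ab_group_add)"
  by (induction n) (simp_all add: add_nonneg_nonneg)

lemma nmul_mono_n: "0 \<le> x \<Longrightarrow> m \<le> n \<Longrightarrow> nmul m x \<le> nmul n (x::'a::ordered_ab_group_add)"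
proof (induction n)
  case 0 then show ?case by simp
next
  case (Suc n)
  show ?case
  proof (cases "m = Suc n")
    case True then show ?thesis by simp
  next
    case False
    then have "m \<le> n" using Suc.prems by simp
    then have "nmul m x \<le> nmul n x" using Suc by simp
    also have "\<dots> \<le> x + nmul n x" using Suc.prems by (simp add: add_increasing)
    finally show ?thesis by simp
  qed
qed

lemma disj_nmul: "vl_disj x y \<Longrightarrow> vl_disj x (nmul n (y::'a::{ordered_ab_group_add,lattice}))"
  by (induction n) (simp_all add: disj_add)

lemma inf_pp_nn: "inf (pp x) (nn x) = (0::'a::{ordered_ab_group_add,lattice})"
proof -
  have "pp x + nn x = sup (pp x) (nn x) + inf (pp x) (nn x)" by (rule LG.add_eq_inf_sup)
  moreover have "sup (pp x) (nn x) = sup (vl_abs x) 0"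
    unfolding pp_def nn_def vl_abs_def by (simp add: sup_aci)
  moreover have "sup (vl_abs x) 0 = vl_abs x" using abs_ge0[of x] by (simp add: sup.absorb1)
  ultimately show ?thesis by (simp add: abs_pp_nn)
qed

lemma inf_zero_add:
  fixes x y z :: "'a::{ordered_ab_group_add,lattice}"
  assumes "0 \<le> x" "0 \<le> y" "0 \<le> z" "inf x y = 0" "inf x z = 0"
  shows "inf x (y + z) = 0"
proof -
  have "inf x (y + z) \<le> 0" using riesz[OF assms(1-3)] assms(4,5) by simp
  moreover have "0 \<le> inf x (y + z)" using assms by simp
  ultimately show ?thesis by simp
qed

lemma abs_pos_diff:
  fixes p q :: "'a::{ordered_ab_group_add,lattice}"
  assumes "0 \<le> p" "0 \<le> q" "inf p q = 0"
  shows "vl_abs (p - q) = p + q"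
proof (rule order.antisym)
  show "vl_abs (p - q) \<le> p + q" using abs_diff_le[of p q] assms by (simp add: abs_pos)
  let ?s = "vl_abs (p - q)"
  have "p + q - ?s \<le> p + q - (p - q)" using abs_ge_self(1)[of "p-q"] by (rule diff_left_mono)
  then have 1: "p + q - ?s \<le> q + q" by (simp add: algebra_simps)
  have "p + q - ?s \<le> p + q - (- (p - q))" using abs_ge_self(2)[of "p-q"] by (rule diff_left_mono)
  then have 2: "p + q - ?s \<le> p + p" by (simp add: algebra_simps)
  have i1: "inf q (p + p) = 0" using inf_zero_add[of q p p] assms by (simp add: inf_commute)
  have "inf (p + p) (q + q) = 0"
    using inf_zero_add[of "p+p" q q] assms i1 by (simp add: inf_commute add_nonneg_nonneg)
  moreover have "p + q - ?s \<le> inf (p + p) (q + q)" using 2 1 by (rule le_infI)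
  ultimately have "p + q - ?s \<le> 0" by simp
  then show "p + q \<le> ?s" by (simp only: diff_le_0_iff_le)
qed

lemma inf_abs_le_zero: "inf (vl_abs x) (vl_abs y) = 0 \<Longrightarrow> 0 \<le> a \<Longrightarrow> a \<le> vl_abs x \<Longrightarrow> 0 \<le> b \<Longrightarrow> b \<le> vl_abs y
   \<Longrightarrow> inf a b = (0::'a::{ordered_ab_group_add,lattice})"
proof -
  assume h: "inf (vl_abs x) (vl_abs y) = 0" "0 \<le> a" "a \<le> vl_abs x" "0 \<le> b" "b \<le> vl_abs y"
  have "inf a b \<le> inf (vl_abs x) (vl_abs y)" using h by (intro inf_mono)
  then show ?thesis using h by (simp add: order.antisym)
qed

lemma abs_disj_add:
  fixes a b :: "'a::{ordered_ab_group_add,lattice}"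
  assumes "vl_disj a b"
  shows "vl_abs (a + b) = vl_abs a + vl_abs b"
proof -
  let ?P = "pp a + pp b" and ?N = "nn a + nn b"
  have d: "inf (vl_abs a) (vl_abs b) = 0" using assms by (simp add: vl_disj_def)
  have d': "inf (vl_abs b) (vl_abs a) = 0" using d by (simp add: inf_commute)
  have "?P - ?N = (pp a - nn a) + (pp b - nn b)" by (simp add: algebra_simps)
  then have e: "a + b = ?P - ?N" by (simp add: pp_nn)
  have z1: "inf (pp a) (nn b) = 0" by (rule inf_abs_le_zero[OF d pp_ge0 pp_le_abs nn_ge0 nn_le_abs])
  have z2: "inf (pp b) (nn a) = 0" by (rule inf_abs_le_zero[OF d' pp_ge0 pp_le_abs nn_ge0 nn_le_abs])
  have "inf (pp a) ?N = 0" using inf_zero_add[of "pp a" "nn a" "nn b"] z1 inf_pp_nn pp_ge0 nn_ge0 by blast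
  moreover have "inf (pp b) ?N = 0" using inf_zero_add[of "pp b" "nn a" "nn b"] z2 inf_pp_nn pp_ge0 nn_ge0 by blast
  ultimately have "inf ?N (pp a) = 0" "inf ?N (pp b) = 0" by (simp_all add: inf_commute)
  then have "inf ?N ?P = 0"
    by (intro inf_zero_add) (auto simp: add_nonneg_nonneg pp_ge0 nn_ge0)
  then have "inf ?P ?N = 0" by (simp add: inf_commute)
  then have "vl_abs (?P - ?N) = ?P + ?N"
    by (rule abs_pos_diff[OF add_nonneg_nonneg[OF pp_ge0 pp_ge0] add_nonneg_nonneg[OF nn_ge0 nn_ge0]])
  then have "vl_abs (a + b) = ?P + ?N" unfolding e .
  also have "?P + ?N = vl_abs a + vl_abs b" unfolding abs_pp_nn by (simp add: algebra_simps)
  finally show ?thesis .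
qed

section \<open>Fragments\<close>

lemma frag_0[simp]: "0 \<in> fragments x" and frag_self[simp]: "x \<in> fragments x"
  by (simp_all add: fragments_def)

lemma frag_compl: "z \<in> fragments x \<Longrightarrow> x - z \<in> fragments (x::'a::{ordered_ab_group_add,lattice})"
  by (simp add: fragments_def disj_sym)

lemma frag_abs: "z \<in> fragments x \<Longrightarrow> vl_abs x = vl_abs z + vl_abs (x - z::'a::{ordered_ab_group_add,lattice})"
  unfolding fragments_def using abs_disj_add by fastforce

lemma frag_le: "z \<in> fragments x \<Longrightarrow> vl_abs z \<le> vl_abs (x::'a::{ordered_ab_group_add,lattice})"
proof -
  assume z: "z \<in> fragments x"
  have "vl_abs z \<le> vl_abs z + vl_abs (x - z)" by (rule add_increasing2[OF abs_ge0 order_refl])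
  then show ?thesis using frag_abs[OF z] by simp
qed

lemma frag_bounds: "z \<in> fragments x \<Longrightarrow> - vl_abs x \<le> z \<and> z \<le> vl_abs (x::'a::{ordered_ab_group_add,lattice})"
proof -
  assume "z \<in> fragments x"
  then have l: "vl_abs z \<le> vl_abs x" by (rule frag_le)
  have "z \<le> vl_abs x" using abs_ge_self(1)[of z] l by (rule order_trans)
  moreover have "- z \<le> vl_abs x" using abs_ge_self(2)[of z] l by (rule order_trans)
  ultimately show ?thesis by (simp add: minus_le_iff)
qed

lemma frag_add:
  fixes u v a b :: "'a::{ordered_ab_group_add,lattice}"
  assumes uv: "vl_disj u v" and a: "a \<in> fragments u" and b: "b \<in> fragments v"
  shows "a + b \<in> fragments (u + v)" "vl_disj a b" "vl_disj (u - a) (v - b)"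
proof -
  have la: "vl_abs a \<le> vl_abs u" "vl_abs (u - a) \<le> vl_abs u" using a frag_le frag_compl by blast+
  have lb: "vl_abs b \<le> vl_abs v" "vl_abs (v - b) \<le> vl_abs v" using b frag_le frag_compl by blast+
  have g: "vl_disj x y" if "vl_abs x \<le> vl_abs u" "vl_abs y \<le> vl_abs v" for x y
  proof -
    have "vl_disj u y" using disj_solid[OF uv that(2)] .
    then have "vl_disj y u" by (simp add: disj_sym)
    then have "vl_disj y x" using disj_solid that(1) by blast
    then show ?thesis by (simp add: disj_sym)
  qed
  show "vl_disj a b" "vl_disj (u - a) (v - b)" using g la lb by auto
  have "vl_disj (a + b) ((u - a) + (v - b))"
  proof -
    have "vl_disj a (u - a)" using a by (simp add: fragments_def)
    moreover have "vl_disj a (v - b)" using g la lb by auto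
    moreover have "vl_disj (u - a) b" using g la lb by auto
    then have "vl_disj b (u - a)" by (simp add: disj_sym)
    moreover have "vl_disj b (v - b)" using b by (simp add: fragments_def)
    ultimately show ?thesis by (meson disj_add disj_sym)
  qed
  then show "a + b \<in> fragments (u + v)" by (simp add: fragments_def algebra_simps)
qed

lemma inf_add_disj:
  fixes p r s :: "'a::{ordered_ab_group_add,lattice}"
  assumes "0 \<le> p" "0 \<le> r" "0 \<le> s" "inf r s = 0"
  shows "inf p r + inf p s = inf p (r + s)"
proof (rule order.antisym)
  show "inf p (r + s) \<le> inf p r + inf p s" by (rule riesz) (use assms in auto)
  have "inf (inf p r) (inf p s) \<le> inf r s" by (intro le_infI) (auto intro: le_infI1 le_infI2)
  then have "inf (inf p r) (inf p s) = 0" using assms by (simp add: order.antisym)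
  then have "inf p r + inf p s = sup (inf p r) (inf p s)" by (rule disj_pos_sum_sup)
  also have "\<dots> \<le> inf p (r + s)"
    using assms by (auto intro!: le_infI intro: le_infI1 le_infI2 add_increasing add_increasing2)
  finally show "inf p r + inf p s \<le> inf p (r + s)" .
qed

definition fpart :: "'a::{ordered_ab_group_add,lattice} \<Rightarrow> 'a \<Rightarrow> 'a" where
  "fpart z u = inf (pp z) (vl_abs u) - inf (nn z) (vl_abs u)"

lemma fpart_sum:
  fixes u v z :: "'a::{ordered_ab_group_add,lattice}"
  assumes uv: "vl_disj u v" and z: "z \<in> fragments (u + v)"
  shows "fpart z u + fpart z v = z"
proof -
  have ax: "vl_abs (u + v) = vl_abs u + vl_abs v" using abs_disj_add[OF uv] .
  have d: "inf (vl_abs u) (vl_abs v) = 0" using uv by (simp add: vl_disj_def)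
  have "inf (pp z) (vl_abs u) + inf (pp z) (vl_abs v) = inf (pp z) (vl_abs (u + v))"
    using inf_add_disj[OF pp_ge0 abs_ge0 abs_ge0 d] ax by simp
  also have "\<dots> = pp z" by (rule inf.absorb1) (rule order_trans[OF pp_le_abs frag_le[OF z]])
  finally have 1: "inf (pp z) (vl_abs u) + inf (pp z) (vl_abs v) = pp z" .
  have "inf (nn z) (vl_abs u) + inf (nn z) (vl_abs v) = inf (nn z) (vl_abs (u + v))"
    using inf_add_disj[OF nn_ge0 abs_ge0 abs_ge0 d] ax by simp
  also have "\<dots> = nn z" by (rule inf.absorb1) (rule order_trans[OF nn_le_abs frag_le[OF z]])
  finally have 2: "inf (nn z) (vl_abs u) + inf (nn z) (vl_abs v) = nn z" .
  have "fpart z u + fpart z v = (inf (pp z) (vl_abs u) + inf (pp z) (vl_abs v))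
     - (inf (nn z) (vl_abs u) + inf (nn z) (vl_abs v))"
    by (simp only: fpart_def) (simp only: diff_conv_add_uminus minus_add_distrib add.assoc add.left_commute add.commute)
  also have "\<dots> = z" unfolding 1 2 by (rule pp_nn)
  finally show ?thesis .
qed

lemma fpart_frag:
  fixes u v z :: "'a::{ordered_ab_group_add,lattice}"
  assumes uv: "vl_disj u v" and z: "z \<in> fragments (u + v)"
  shows "fpart z u \<in> fragments u"
proof -
  let ?x = "u + v"
  let ?p1 = "inf (pp z) (vl_abs u)" and ?q1 = "inf (nn z) (vl_abs u)"
  let ?p2 = "inf (pp z) (vl_abs v)" and ?q2 = "inf (nn z) (vl_abs v)"
  have vu: "vl_disj v u" using uv disj_sym by blast
  have e: "u - fpart z u = (?x - z) - (v - fpart z v)"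
    using fpart_sum[OF uv z] by (simp add: algebra_simps)
  have xz: "vl_disj (?x - z) z" using z by (simp add: fragments_def disj_sym)
  have key: "vl_disj w (u - fpart z u)" if w0: "0 \<le> w" and wz: "w \<le> vl_abs z" and wu: "w \<le> vl_abs u" for w
  proof -
    have 1: "vl_disj w (?x - z)" using disj_solid_pos[OF xz w0 wz] disj_sym by blast
    have wv: "vl_disj w v" using disj_solid_pos[OF vu w0 wu] disj_sym by blast
    have "vl_disj w ?p2" by (rule disj_solid_pos[OF wv]) (simp_all add: pp_ge0 abs_ge0)
    moreover have "vl_disj w ?q2" by (rule disj_solid_pos[OF wv]) (simp_all add: nn_ge0 abs_ge0)
    ultimately have "vl_disj w (fpart z v)" unfolding fpart_def by (rule disj_diff)
    then have "vl_disj w (v - fpart z v)" using wv disj_diff by blast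
    with 1 have "vl_disj w ((?x - z) - (v - fpart z v))" by (rule disj_diff)
    then show ?thesis by (simp only: e)
  qed
  have "vl_disj ?p1 (u - fpart z u)"
    by (rule key) (use pp_le_abs[of z] pp_ge0[of z] abs_ge0[of u] in \<open>auto intro: le_infI1\<close>)
  moreover have "vl_disj ?q1 (u - fpart z u)"
    by (rule key) (use nn_le_abs[of z] nn_ge0[of z] abs_ge0[of u] in \<open>auto intro: le_infI1\<close>)
  ultimately have "vl_disj (u - fpart z u) (fpart z u)"
    unfolding fpart_def by (meson disj_diff disj_sym)
  then show ?thesis by (simp add: fragments_def disj_sym)
qed

lemma frag_split:
  fixes u v z :: "'a::{ordered_ab_group_add,lattice}"
  assumes uv: "vl_disj u v" and z: "z \<in> fragments (u + v)"
  shows "\<exists>a\<in>fragments u. \<exists>b\<in>fragments v. z = a + b"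
proof -
  have vu: "vl_disj v u" using uv disj_sym by blast
  have z': "z \<in> fragments (v + u)" using z by (simp add: add.commute)
  have "fpart z u \<in> fragments u" by (rule fpart_frag[OF uv z])
  moreover have "fpart z v \<in> fragments v" by (rule fpart_frag[OF vu z'])
  moreover have "z = fpart z u + fpart z v" using fpart_sum[OF uv z] by simp
  ultimately show ?thesis by blast
qed


section \<open>Conditionally complete lattice groups\<close>

lemma lub_unique: "is_lub_of D s \<Longrightarrow> is_lub_of D t \<Longrightarrow> s = (t::'a::order)"
  unfolding is_lub_of_def by (meson order.antisym)

lemma lub_inf_distrib:
  fixes a s :: "'a::{ordered_ab_group_add,lattice}"
  assumes "is_lub_of D s" "D \<noteq> {}"
  shows "is_lub_of (inf a ` D) (inf a s)"
  unfolding is_lub_of_def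
proof (intro conjI allI impI ballI)
  fix x assume "x \<in> inf a ` D"
  then obtain d where d: "d \<in> D" "x = inf a d" by auto
  then have "d \<le> s" using assms(1) by (simp add: is_lub_of_def)
  then have "inf a d \<le> inf a s" by (rule inf_mono[OF order_refl])
  then show "x \<le> inf a s" using d by simp
next
  fix u assume u: "\<forall>x\<in>inf a ` D. x \<le> u"
  have "d \<le> u + sup a s - a" if d: "d \<in> D" for d
  proof -
    have "a + d = sup a d + inf a d" by (rule LG.add_eq_inf_sup)
    moreover have "inf a d \<le> u" using u d by auto
    moreover have "sup a d \<le> sup a s" using d assms(1) by (simp add: is_lub_of_def sup.coboundedI2)
    ultimately have "a + d \<le> sup a s + u" by (metis add_mono add.commute)
    then show ?thesis by (simp add: algebra_simps le_diff_eq)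
  qed
  then have "s \<le> u + sup a s - a" using assms(1) by (simp add: is_lub_of_def)
  moreover have "a + s = sup a s + inf a s" by (rule LG.add_eq_inf_sup)
  ultimately have "sup a s + inf a s \<le> sup a s + u" by (simp add: algebra_simps le_diff_eq)
  then show "inf a s \<le> u" by simp
qed

lemma lub_Sup:
  fixes D :: "'a::conditionally_complete_lattice set"
  shows "D \<noteq> {} \<Longrightarrow> bdd_above D \<Longrightarrow> is_lub_of D (Sup D)"
  unfolding is_lub_of_def by (auto intro: cSup_upper cSup_least)

lemma lub_imp_Sup:
  fixes D :: "'a::conditionally_complete_lattice set"
  shows "D \<noteq> {} \<Longrightarrow> is_lub_of D s \<Longrightarrow> Sup D = s"
proof -
  assume a: "D \<noteq> {}" "is_lub_of D s"
  then have "bdd_above D" unfolding is_lub_of_def bdd_above_def by blast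
  then show ?thesis using lub_Sup[OF a(1)] a(2) lub_unique by blast
qed

lemma inf_Sup_distrib:
  fixes D :: "'a::{ordered_ab_group_add,conditionally_complete_lattice} set"
  assumes "D \<noteq> {}" "bdd_above D"
  shows "inf a (Sup D) = Sup (inf a ` D)"
  using lub_imp_Sup[OF _ lub_inf_distrib[OF lub_Sup[OF assms] assms(1)]] assms(1) by simp

lemma Sup_plus:
  fixes D :: "'a::{ordered_ab_group_add,conditionally_complete_lattice} set"
  assumes "D \<noteq> {}" "bdd_above D"
  shows "Sup ((\<lambda>x. c + x) ` D) = c + Sup D"
proof (rule lub_imp_Sup)
  show "(\<lambda>x. c + x) ` D \<noteq> {}" using assms by simp
  show "is_lub_of ((\<lambda>x. c + x) ` D) (c + Sup D)"
    unfolding is_lub_of_def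
  proof (intro conjI allI impI ballI)
    fix y assume "y \<in> (\<lambda>x. c + x) ` D"
    then show "y \<le> c + Sup D" using assms by (auto intro: cSup_upper)
  next
    fix u assume "\<forall>y\<in>(\<lambda>x. c + x) ` D. y \<le> u"
    then have "\<forall>x\<in>D. x \<le> u - c" by (auto simp: le_diff_eq add.commute)
    then have "Sup D \<le> u - c" using assms by (auto intro: cSup_least)
    then show "c + Sup D \<le> u" by (simp add: le_diff_eq add.commute)
  qed
qed

lemma Inf_plus:
  fixes D :: "'a::{ordered_ab_group_add,conditionally_complete_lattice} set"
  assumes "D \<noteq> {}" "bdd_below D"
  shows "Inf ((\<lambda>x. c + x) ` D) = c + Inf D"
proof (rule order.antisym)
  show "Inf ((\<lambda>x. c + x) ` D) \<le> c + Inf D"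
  proof -
    have "\<forall>x\<in>D. Inf ((\<lambda>x. c + x) ` D) - c \<le> x"
    proof
      fix x assume "x \<in> D"
      moreover have "bdd_below ((\<lambda>x. c + x) ` D)" using assms(2)
        unfolding bdd_below_def by (auto intro: add_left_mono)
      ultimately have "Inf ((\<lambda>x. c + x) ` D) \<le> c + x" by (auto intro: cInf_lower)
      then show "Inf ((\<lambda>x. c + x) ` D) - c \<le> x" by (simp add: diff_le_eq add.commute)
    qed
    then have "Inf ((\<lambda>x. c + x) ` D) - c \<le> Inf D" using assms by (auto intro: cInf_greatest)
    then show ?thesis by (simp add: diff_le_eq add.commute)
  qed
  show "c + Inf D \<le> Inf ((\<lambda>x. c + x) ` D)"
    using assms by (auto intro!: cInf_greatest add_left_mono cInf_lower)
qed

lemma minus_Sup: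
  fixes D :: "'a::{ordered_ab_group_add,conditionally_complete_lattice} set"
  assumes "D \<noteq> {}" "bdd_above D"
  shows "c - Sup D = Inf ((\<lambda>x. c - x) ` D)"
proof (rule order.antisym)
  show "c - Sup D \<le> Inf ((\<lambda>x. c - x) ` D)"
    using assms by (auto intro!: cInf_greatest diff_left_mono cSup_upper)
  have b: "bdd_below ((\<lambda>x. c - x) ` D)" using assms(2)
    unfolding bdd_below_def bdd_above_def by (auto intro: diff_left_mono)
  have "\<forall>x\<in>D. x \<le> c - Inf ((\<lambda>x. c - x) ` D)"
  proof
    fix x assume "x \<in> D"
    then have "Inf ((\<lambda>x. c - x) ` D) \<le> c - x" using b by (auto intro: cInf_lower)
    then show "x \<le> c - Inf ((\<lambda>x. c - x) ` D)" by (simp add: le_diff_eq diff_le_eq add.commute)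
  qed
  then have "Sup D \<le> c - Inf ((\<lambda>x. c - x) ` D)" using assms by (auto intro: cSup_least)
  then show "Inf ((\<lambda>x. c - x) ` D) \<le> c - Sup D" by (simp add: le_diff_eq diff_le_eq add.commute)
qed

lemma minus_Inf:
  fixes D :: "'a::{ordered_ab_group_add,conditionally_complete_lattice} set"
  assumes "D \<noteq> {}" "bdd_below D"
  shows "c - Inf D = Sup ((\<lambda>x. c - x) ` D)"
proof (rule order.antisym)
  show "Sup ((\<lambda>x. c - x) ` D) \<le> c - Inf D"
    using assms by (auto intro!: cSup_least diff_left_mono cInf_lower)
  have b: "bdd_above ((\<lambda>x. c - x) ` D)" using assms(2)
    unfolding bdd_below_def bdd_above_def by (auto intro: diff_left_mono)
  have "\<forall>x\<in>D. c - Sup ((\<lambda>x. c - x) ` D) \<le> x"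
  proof
    fix x assume "x \<in> D"
    then have "c - x \<le> Sup ((\<lambda>x. c - x) ` D)" using b by (auto intro: cSup_upper)
    then show "c - Sup ((\<lambda>x. c - x) ` D) \<le> x" by (simp add: le_diff_eq diff_le_eq add.commute)
  qed
  then have "c - Sup ((\<lambda>x. c - x) ` D) \<le> Inf D" using assms by (auto intro: cInf_greatest)
  then show "c - Inf D \<le> Sup ((\<lambda>x. c - x) ` D)" by (simp add: le_diff_eq diff_le_eq add.commute)
qed

lemma Inf_sumset:
  fixes f g :: "'i \<Rightarrow> 'a::{ordered_ab_group_add,conditionally_complete_lattice}"
  assumes "A \<noteq> {}" "B \<noteq> {}" "bdd_below (f ` A)" "bdd_below (g ` B)"
  shows "Inf {f a + g b |a b. a \<in> A \<and> b \<in> B} = Inf (f ` A) + Inf (g ` B)"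
proof (rule order.antisym)
  let ?S = "{f a + g b |a b. a \<in> A \<and> b \<in> B}"
  show "Inf (f ` A) + Inf (g ` B) \<le> Inf ?S"
    using assms by (auto intro!: cInf_greatest add_mono cInf_lower)
  have bS: "bdd_below ?S"
  proof -
    obtain l1 where "\<forall>a\<in>A. l1 \<le> f a" using assms(3) unfolding bdd_below_def by auto
    moreover obtain l2 where "\<forall>b\<in>B. l2 \<le> g b" using assms(4) unfolding bdd_below_def by auto
    ultimately show ?thesis unfolding bdd_below_def by (auto intro!: exI[of _ "l1 + l2"] add_mono)
  qed
  have "\<forall>b\<in>B. Inf ?S - Inf (f ` A) \<le> g b"
  proof
    fix b assume b: "b \<in> B"
    have "\<forall>a\<in>A. Inf ?S - g b \<le> f a"
    proof
      fix a assume "a \<in> A"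
      then have "f a + g b \<in> ?S" using b by blast
      then have "Inf ?S \<le> f a + g b" using bS by (rule cInf_lower)
      then show "Inf ?S - g b \<le> f a" by (simp add: diff_le_eq)
    qed
    then have "Inf ?S - g b \<le> Inf (f ` A)" using assms(1) by (auto intro: cInf_greatest)
    then show "Inf ?S - Inf (f ` A) \<le> g b" by (simp add: diff_le_eq le_diff_eq add.commute)
  qed
  then have "Inf ?S - Inf (f ` A) \<le> Inf (g ` B)" using assms(2) by (auto intro: cInf_greatest)
  then show "Inf ?S \<le> Inf (f ` A) + Inf (g ` B)" by (simp add: diff_le_eq add.commute)
qed

lemma Sup_sumset:
  fixes f g :: "'i \<Rightarrow> 'a::{ordered_ab_group_add,conditionally_complete_lattice}"
  assumes "A \<noteq> {}" "B \<noteq> {}" "bdd_above (f ` A)" "bdd_above (g ` B)"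
  shows "Sup {f a + g b |a b. a \<in> A \<and> b \<in> B} = Sup (f ` A) + Sup (g ` B)"
proof (rule order.antisym)
  let ?S = "{f a + g b |a b. a \<in> A \<and> b \<in> B}"
  show "Sup ?S \<le> Sup (f ` A) + Sup (g ` B)"
    using assms by (auto intro!: cSup_least add_mono cSup_upper)
  have bS: "bdd_above ?S"
  proof -
    obtain l1 where "\<forall>a\<in>A. f a \<le> l1" using assms(3) unfolding bdd_above_def by auto
    moreover obtain l2 where "\<forall>b\<in>B. g b \<le> l2" using assms(4) unfolding bdd_above_def by auto
    ultimately show ?thesis unfolding bdd_above_def by (auto intro!: exI[of _ "l1 + l2"] add_mono)
  qed
  have "\<forall>b\<in>B. g b \<le> Sup ?S - Sup (f ` A)"
  proof
    fix b assume b: "b \<in> B"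
    have "\<forall>a\<in>A. f a \<le> Sup ?S - g b"
    proof
      fix a assume "a \<in> A"
      then have "f a + g b \<in> ?S" using b by blast
      then have "f a + g b \<le> Sup ?S" using bS by (rule cSup_upper)
      then show "f a \<le> Sup ?S - g b" by (simp add: le_diff_eq)
    qed
    then have "Sup (f ` A) \<le> Sup ?S - g b" using assms(1) by (auto intro: cSup_least)
    then show "g b \<le> Sup ?S - Sup (f ` A)" by (simp add: diff_le_eq le_diff_eq add.commute)
  qed
  then have "Sup (g ` B) \<le> Sup ?S - Sup (f ` A)" using assms(2) by (auto intro: cSup_least)
  then show "Sup (f ` A) + Sup (g ` B) \<le> Sup ?S" by (simp add: le_diff_eq add.commute)
qed

lemma directed_Sup_add:
  fixes f g :: "'i \<Rightarrow> 'a::{ordered_ab_group_add,conditionally_complete_lattice}"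
  assumes "I \<noteq> {}" "bdd_above (f ` I)" "bdd_above (g ` I)"
    and dir: "\<And>i j. i \<in> I \<Longrightarrow> j \<in> I \<Longrightarrow> \<exists>k\<in>I. f i \<le> f k \<and> g j \<le> g k"
  shows "Sup ((\<lambda>i. f i + g i) ` I) = Sup (f ` I) + Sup (g ` I)"
proof (rule order.antisym)
  show "Sup ((\<lambda>i. f i + g i) ` I) \<le> Sup (f ` I) + Sup (g ` I)"
    using assms by (auto intro!: cSup_least add_mono cSup_upper)
  have bS: "bdd_above ((\<lambda>i. f i + g i) ` I)"
  proof -
    obtain l1 where "\<forall>i\<in>I. f i \<le> l1" using assms(2) unfolding bdd_above_def by auto
    moreover obtain l2 where "\<forall>i\<in>I. g i \<le> l2" using assms(3) unfolding bdd_above_def by auto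
    ultimately show ?thesis unfolding bdd_above_def by (auto intro!: exI[of _ "l1 + l2"] add_mono)
  qed
  let ?S = "Sup ((\<lambda>i. f i + g i) ` I)"
  have "\<forall>j\<in>I. g j \<le> ?S - Sup (f ` I)"
  proof
    fix j assume j: "j \<in> I"
    have "\<forall>i\<in>I. f i \<le> ?S - g j"
    proof
      fix i assume i: "i \<in> I"
      obtain k where k: "k \<in> I" "f i \<le> f k" "g j \<le> g k" using dir[OF i j] by blast
      have "f i + g j \<le> f k + g k" using k by (simp add: add_mono)
      also have "\<dots> \<le> ?S" using bS k(1) by (auto intro: cSup_upper)
      finally show "f i \<le> ?S - g j" by (simp add: le_diff_eq)
    qed
    then have "Sup (f ` I) \<le> ?S - g j" using assms(1) by (auto intro: cSup_least)
    then show "g j \<le> ?S - Sup (f ` I)" by (simp add: diff_le_eq le_diff_eq add.commute)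
  qed
  then have "Sup (g ` I) \<le> ?S - Sup (f ` I)" using assms(1) by (auto intro: cSup_least)
  then show "Sup (f ` I) + Sup (g ` I) \<le> ?S" by (simp add: le_diff_eq add.commute)
qed

lemma archimedean:
  fixes g y :: "'a::{ordered_ab_group_add,conditionally_complete_lattice}"
  assumes "0 \<le> g" "\<And>n. nmul n g \<le> y"
  shows "g = 0"
proof -
  let ?D = "range (\<lambda>n. nmul n g)"
  have bd: "bdd_above ?D" using assms(2) by (auto simp: bdd_above_def)
  have "\<forall>x\<in>?D. x \<le> Sup ?D - g"
  proof
    fix x assume "x \<in> ?D"
    then obtain n where n: "x = nmul n g" by auto
    have "nmul (Suc n) g \<le> Sup ?D" by (rule cSup_upper[OF rangeI bd])
    then show "x \<le> Sup ?D - g" using n by (simp add: le_diff_eq add.commute)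
  qed
  then have "Sup ?D \<le> Sup ?D - g" by (intro cSup_least) blast+
  then have "g \<le> 0" by (simp add: le_diff_eq)
  then show ?thesis using assms(1) by simp
qed

lemma inf_zero_nmul:
  fixes m c :: "'a::{ordered_ab_group_add,lattice}"
  assumes "0 \<le> m" "0 \<le> c" "inf m c = 0"
  shows "inf m (nmul n c) = 0"
proof (induction n)
  case 0 then show ?case using assms by (simp add: inf.absorb2)
next
  case (Suc n)
  then show ?case using inf_zero_add[OF assms(1,2) nmul_nonneg[OF assms(2)] assms(3)] by simp
qed

lemma L2:
  fixes a b :: "'a::{ordered_ab_group_add,lattice}"
  assumes a0: "0 \<le> a" and b0: "0 \<le> b"
  shows "nmul n (inf (pp (a - nmul n b)) b) \<le> a"
proof -
  let ?p = "pp (a - nmul n b)" and ?m = "nn (a - nmul n b)"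
  let ?c = "inf ?p b"
  have c0: "0 \<le> ?c" using b0 pp_ge0 by simp
  have "inf ?m ?c \<le> inf ?m ?p" by (intro inf_mono) simp_all
  also have "inf ?m ?p = 0" using inf_pp_nn by (metis inf_commute)
  finally have le0: "inf ?m ?c \<le> 0" .
  have "0 \<le> inf ?m ?c" using c0 nn_ge0 by simp
  then have "inf ?m ?c = 0" using le0 by (simp add: order.antisym)
  then have mc: "inf ?m (nmul n ?c) = 0" by (rule inf_zero_nmul[OF nn_ge0 c0])
  have "nmul n ?c \<le> nmul n b" by (rule nmul_mono) simp
  also have "nmul n b = a - ?p + ?m" using pp_nn[of "a - nmul n b"] by (simp add: algebra_simps)
  finally have le: "nmul n ?c \<le> a - ?p + ?m" .
  have pa: "?p \<le> a" unfolding pp_def using a0 b0 nmul_nonneg[OF b0, of n] by (simp add: le_supI)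
  then have ap0: "0 \<le> a - ?p" by simp
  have "nmul n ?c = inf (nmul n ?c) (a - ?p + ?m)" using le by (simp add: inf.absorb1)
  also have "\<dots> \<le> inf (nmul n ?c) (a - ?p) + inf (nmul n ?c) ?m"
    by (rule riesz[OF nmul_nonneg[OF c0] ap0 nn_ge0])
  also have "inf (nmul n ?c) ?m = 0" using mc by (simp add: inf_commute)
  also have "inf (nmul n ?c) (a - ?p) + 0 \<le> a - ?p" by simp
  also have "a - ?p \<le> a" using pp_ge0 by simp
  finally show ?thesis .
qed

lemma diff_inf_pp: "t - inf t m = pp (t - (m::'a::{ordered_ab_group_add,lattice}))"
proof -
  have "t - inf t m = t + sup (- t) (- m)" by (simp only: diff_conv_add_uminus LG.neg_inf_eq_sup)
  also have "\<dots> = sup (t + - t) (t + - m)" by (rule LG.add_sup_distrib_left)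
  also have "\<dots> = pp (t - m)" by (simp add: pp_def sup_commute)
  finally show ?thesis .
qed


lemma scaleR_sup:
  fixes a b :: "'a::{ordered_real_vector,lattice}"
  assumes "0 \<le> c"
  shows "c *\<^sub>R sup a b = sup (c *\<^sub>R a) (c *\<^sub>R b)"
proof (cases "c = 0")
  case True then show ?thesis by simp
next
  case False
  then have cp: "0 < c" using assms by simp
  show ?thesis
  proof (rule order.antisym)
    show "sup (c *\<^sub>R a) (c *\<^sub>R b) \<le> c *\<^sub>R sup a b"
      using assms by (intro le_supI scaleR_left_mono) simp_all
    have "a \<le> inverse c *\<^sub>R sup (c *\<^sub>R a) (c *\<^sub>R b)"
    proof -
      have "c *\<^sub>R a \<le> sup (c *\<^sub>R a) (c *\<^sub>R b)" by simp
      then have "inverse c *\<^sub>R (c *\<^sub>R a) \<le> inverse c *\<^sub>R sup (c *\<^sub>R a) (c *\<^sub>R b)"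
        using cp by (intro scaleR_left_mono) simp_all
      then show ?thesis using cp by simp
    qed
    moreover have "b \<le> inverse c *\<^sub>R sup (c *\<^sub>R a) (c *\<^sub>R b)"
    proof -
      have "c *\<^sub>R b \<le> sup (c *\<^sub>R a) (c *\<^sub>R b)" by simp
      then have "inverse c *\<^sub>R (c *\<^sub>R b) \<le> inverse c *\<^sub>R sup (c *\<^sub>R a) (c *\<^sub>R b)"
        using cp by (intro scaleR_left_mono) simp_all
      then show ?thesis using cp by simp
    qed
    ultimately have "sup a b \<le> inverse c *\<^sub>R sup (c *\<^sub>R a) (c *\<^sub>R b)" by simp
    then have "c *\<^sub>R sup a b \<le> c *\<^sub>R (inverse c *\<^sub>R sup (c *\<^sub>R a) (c *\<^sub>R b))"
      using cp by (intro scaleR_left_mono) simp_all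
    then show "c *\<^sub>R sup a b \<le> sup (c *\<^sub>R a) (c *\<^sub>R b)" using cp by simp
  qed
qed

lemma abs_scaleR_pos: "0 \<le> c \<Longrightarrow> vl_abs (c *\<^sub>R x) = c *\<^sub>R vl_abs (x::'a::{ordered_real_vector,lattice})"
  unfolding vl_abs_def by (simp add: scaleR_sup)

lemma abs_scaleR: "vl_abs (c *\<^sub>R x) = \<bar>c\<bar> *\<^sub>R vl_abs (x::'a::{ordered_real_vector,lattice})"
proof (cases "0 \<le> c")
  case True
  then show ?thesis by (simp add: abs_scaleR_pos)
next
  case False
  have "vl_abs (c *\<^sub>R x) = vl_abs ((- c) *\<^sub>R x)" using abs_neg[of "c *\<^sub>R x"] by simp
  also have "\<dots> = (- c) *\<^sub>R vl_abs x" by (rule abs_scaleR_pos) (use False in simp)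
  finally have X: "vl_abs (c *\<^sub>R x) = (- c) *\<^sub>R vl_abs x" .
  have "\<bar>c\<bar> = - c" using False by simp
  then show ?thesis using X by simp
qed

lemma disj_scaleR: "vl_disj x y \<Longrightarrow> vl_disj x (c *\<^sub>R (y::'a::{ordered_real_vector,lattice}))"
proof -
  assume d: "vl_disj x y"
  obtain N :: nat where N: "\<bar>c\<bar> \<le> real N" using real_arch_simple by blast
  have "vl_disj x (vl_abs y)" by (rule disj_solid[OF d]) (simp add: abs_pos[OF abs_ge0])
  then have d2: "vl_disj x (nmul N (vl_abs y))" by (rule disj_nmul)
  have "vl_abs (c *\<^sub>R y) = \<bar>c\<bar> *\<^sub>R vl_abs y" by (rule abs_scaleR)
  also have "\<dots> \<le> real N *\<^sub>R vl_abs y" using N abs_ge0 by (rule scaleR_right_mono)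
  also have "\<dots> = vl_abs (nmul N (vl_abs y))"
    using abs_pos[OF nmul_nonneg[OF abs_ge0], of N y] by (simp add: nmul_real)
  finally show ?thesis by (rule disj_solid[OF d2])
qed

section \<open>Bands\<close>

lemma dcompl_band:
  fixes X :: "'a::{ordered_real_vector,conditionally_complete_lattice} set"
  shows "vl_band (vl_dcompl X)"
  unfolding vl_band_def vl_ideal_def
proof (intro conjI allI ballI impI)
  show "0 \<in> vl_dcompl X" by (simp add: vl_dcompl_def)
  show "x + y \<in> vl_dcompl X" if "x \<in> vl_dcompl X" "y \<in> vl_dcompl X" for x y
    using that by (simp add: vl_dcompl_def disj_add)
  show "c *\<^sub>R x \<in> vl_dcompl X" if "x \<in> vl_dcompl X" for c x
    using that by (simp add: vl_dcompl_def disj_scaleR)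
  show "x \<in> vl_dcompl X" if "y \<in> vl_dcompl X \<and> vl_abs x \<le> vl_abs y" for x y
    using that disj_solid by (auto simp: vl_dcompl_def)
  fix D s assume h: "D \<subseteq> vl_dcompl X \<and> is_lub_of D s"
  show "s \<in> vl_dcompl X"
  proof (cases "D = {}")
    case True
    then have "s \<le> - (vl_abs s + vl_abs s)" using h by (simp add: is_lub_of_def)
    moreover have "- vl_abs s \<le> s" using abs_ge_self(2)[of s] by (simp add: minus_le_iff)
    ultimately have "- vl_abs s \<le> - (vl_abs s + vl_abs s)" by (metis order_trans)
    then have "vl_abs s \<le> 0" by simp
    then have "s = 0" using abs_ge0[of s] abs_zero_iff[of s] by simp
    then show ?thesis by (simp add: vl_dcompl_def)
  next
    case False
    then obtain d0 where d0: "d0 \<in> D" by blast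
    have lub: "is_lub_of D s" using h by simp
    show ?thesis unfolding vl_dcompl_def
    proof (intro CollectI ballI)
      fix x assume x: "x \<in> X"
      have dD: "vl_disj x d" if "d \<in> D" for d using h that x by (auto simp: vl_dcompl_def)
      have lp: "is_lub_of (pp ` D) (pp s)"
        unfolding is_lub_of_def
      proof (intro conjI allI impI ballI)
        fix y assume "y \<in> pp ` D"
        then obtain d where "d \<in> D" "y = pp d" by auto
        then show "y \<le> pp s" using lub by (auto simp: is_lub_of_def pp_def intro: le_supI1)
      next
        fix u assume u: "\<forall>y\<in>pp ` D. y \<le> u"
        have "0 \<le> u" using u d0 pp_ge0 by (metis imageI order_trans)
        moreover have "\<forall>d\<in>D. d \<le> u" using u by (auto simp: pp_def)
        then have "s \<le> u" using lub by (simp add: is_lub_of_def)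
        ultimately show "pp s \<le> u" by (simp add: pp_def)
      qed
      have l2: "is_lub_of (inf (vl_abs x) ` pp ` D) (inf (vl_abs x) (pp s))"
        by (rule lub_inf_distrib[OF lp]) (use False in simp)
      have z: "inf (vl_abs x) (pp d) = 0" if "d \<in> D" for d
        using inf_abs_le_zero[of x d, OF _ abs_ge0 order_refl pp_ge0 pp_le_abs] dD[OF that]
        by (simp add: vl_disj_def)
      have "inf (vl_abs x) ` pp ` D = (\<lambda>d. 0) ` D" using z by (simp add: image_image)
      also have "\<dots> = {0}" using False by blast
      finally have "inf (vl_abs x) ` pp ` D = {0}" .
      moreover have "is_lub_of {0} 0" by (simp add: is_lub_of_def)
      ultimately have ps: "inf (vl_abs x) (pp s) = 0" using l2 lub_unique by metis
      have "d0 \<le> s" using lub d0 unfolding is_lub_of_def by blast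
      then have "- s \<le> - d0" by simp
      then have "nn s \<le> nn d0" unfolding nn_def by (rule sup_mono) simp
      then have "inf (vl_abs x) (nn s) \<le> inf (vl_abs x) (nn d0)" by (rule inf_mono[OF order_refl])
      also have "inf (vl_abs x) (nn d0) = 0"
        using inf_abs_le_zero[of x d0, OF _ abs_ge0 order_refl nn_ge0 nn_le_abs] dD[OF d0]
        by (simp add: vl_disj_def)
      finally have ns: "inf (vl_abs x) (nn s) \<le> 0" .
      have "inf (vl_abs x) (vl_abs s) \<le> inf (vl_abs x) (pp s) + inf (vl_abs x) (nn s)"
        unfolding abs_pp_nn[of s] by (rule riesz[OF abs_ge0 pp_ge0 nn_ge0])
      also have "\<dots> \<le> 0" using ps ns by simp
      finally have "inf (vl_abs x) (vl_abs s) \<le> 0" .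
      moreover have "0 \<le> inf (vl_abs x) (vl_abs s)" by (simp add: abs_ge0)
      ultimately show "vl_disj x s" unfolding vl_disj_def by simp
    qed
  qed
qed

section \<open>Band projections\<close>

lemma bp_unique:
  fixes B :: "'a::{ordered_real_vector,lattice} set"
  assumes "vl_ideal B" "b1 \<in> B" "b2 \<in> B" "c1 \<in> vl_dcompl B" "c2 \<in> vl_dcompl B" "b1 + c1 = b2 + c2"
  shows "b1 = b2"
proof -
  have "(-1) *\<^sub>R b2 \<in> B" using assms(1,3) unfolding vl_ideal_def by blast
  then have "- b2 \<in> B" by simp
  then have "b1 + - b2 \<in> B" using assms(1,2) unfolding vl_ideal_def by blast
  then have m: "b1 - b2 \<in> B" by simp
  have "c2 - c1 \<in> vl_dcompl B" using assms(4,5) by (simp add: vl_dcompl_def disj_diff)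
  moreover have "c2 - c1 = b1 - b2" using assms(6) by (simp add: algebra_simps)
  ultimately have "vl_disj (b1 - b2) (b1 - b2)" using m by (simp add: vl_dcompl_def)
  then have "b1 - b2 = 0" by (rule disj_self)
  then show ?thesis by simp
qed

lemma bp_add:
  fixes \<rho> :: "'a::{ordered_real_vector,lattice} \<Rightarrow> 'a"
  assumes "band_projection \<rho>"
  shows "\<rho> (x + y) = \<rho> x + \<rho> y"
proof -
  obtain B where B: "vl_band B" "\<And>x. \<rho> x \<in> B \<and> x - \<rho> x \<in> vl_dcompl B"
    using assms unfolding band_projection_def by blast
  have I: "vl_ideal B" using B(1) by (simp add: vl_band_def)
  have "\<rho> x + \<rho> y \<in> B" using I B(2) by (simp add: vl_ideal_def)
  moreover have "(x - \<rho> x) + (y - \<rho> y) \<in> vl_dcompl B" using B(2)[of x] B(2)[of y]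
    by (simp add: vl_dcompl_def disj_add)
  moreover have "\<rho> (x + y) + ((x + y) - \<rho> (x + y)) = (\<rho> x + \<rho> y) + ((x - \<rho> x) + (y - \<rho> y))"
    by (simp add: algebra_simps)
  ultimately show ?thesis using bp_unique[OF I] B(2) by blast
qed

lemma bp_0: "band_projection \<rho> \<Longrightarrow> \<rho> 0 = (0::'a::{ordered_real_vector,lattice})"
  using bp_add[of \<rho> 0 0] by simp

lemma bp_diff: "band_projection \<rho> \<Longrightarrow> \<rho> (x - y) = \<rho> x - \<rho> (y::'a::{ordered_real_vector,lattice})"
  using bp_add[of \<rho> "x - y" y] by (simp add: algebra_simps)

lemma bp_nmul: "band_projection \<rho> \<Longrightarrow> \<rho> (nmul n x) = nmul n (\<rho> (x::'a::{ordered_real_vector,lattice}))"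
  by (induction n) (simp_all add: bp_0 bp_add)

lemma pos_decomp:
  fixes x b c :: "'a::{ordered_ab_group_add,lattice}"
  assumes "0 \<le> x" "vl_disj b c" "x = b + c"
  shows "0 \<le> b"
proof -
  have d: "inf (vl_abs b) (vl_abs c) = 0" using assms(2) by (simp add: vl_disj_def)
  have "inf (nn b) (vl_abs c) = 0"
    by (rule inf_abs_le_zero[OF d nn_ge0 nn_le_abs abs_ge0 order_refl])
  moreover have "inf (nn b) (pp b) = 0" using inf_pp_nn by (metis inf_commute)
  ultimately have z: "inf (nn b) (pp b + vl_abs c) = 0"
    by (intro inf_zero_add nn_ge0 pp_ge0 abs_ge0)
  have "0 \<le> pp b - nn b + c" using assms(1,3) pp_nn[of b] by simp
  then have "nn b \<le> pp b + c" by (simp add: algebra_simps)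
  also have "\<dots> \<le> pp b + vl_abs c" using abs_ge_self(1) by (rule add_left_mono)
  finally have "nn b = 0" using z by (simp add: inf.absorb1)
  then show ?thesis using pp_nn[of b] pp_ge0[of b] by simp
qed

lemma bp_pos:
  fixes \<rho> :: "'a::{ordered_real_vector,lattice} \<Rightarrow> 'a"
  assumes "band_projection \<rho>" "0 \<le> x"
  shows "0 \<le> \<rho> x" "\<rho> x \<le> x"
proof -
  obtain B where B: "vl_band B" "\<And>x. \<rho> x \<in> B \<and> x - \<rho> x \<in> vl_dcompl B"
    using assms unfolding band_projection_def by blast
  have d: "vl_disj (\<rho> x) (x - \<rho> x)" using B(2)[of x] by (simp add: vl_dcompl_def)
  show "0 \<le> \<rho> x" by (rule pos_decomp[OF assms(2) d]) simp
  have "0 \<le> x - \<rho> x" by (rule pos_decomp[OF assms(2) d[unfolded disj_sym[of "\<rho> x"]]]) simp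
  then show "\<rho> x \<le> x" by simp
qed

lemma bp_le_pp:
  fixes \<rho> :: "'a::{ordered_real_vector,lattice} \<Rightarrow> 'a"
  assumes "band_projection \<rho>"
  shows "\<rho> x \<le> pp x"
proof -
  have "\<rho> x = \<rho> (pp x) - \<rho> (nn x)" using bp_diff[OF assms] pp_nn[of x] by metis
  also have "\<dots> \<le> \<rho> (pp x)" using bp_pos(1)[OF assms nn_ge0] by simp
  also have "\<dots> \<le> pp x" by (rule bp_pos(2)[OF assms pp_ge0])
  finally show ?thesis .
qed

lemma bp_id: "band_projection (\<lambda>x::'a::{ordered_real_vector,conditionally_complete_lattice}. x)"
proof -
  have "vl_dcompl {0::'a} = UNIV" by (simp add: vl_dcompl_def)
  then have "vl_band (UNIV::'a set)" using dcompl_band[of "{0::'a}"] by simp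
  moreover have "(0::'a) \<in> vl_dcompl UNIV" by (simp add: vl_dcompl_def)
  ultimately show ?thesis unfolding band_projection_def by (intro exI[of _ UNIV]) simp
qed

section \<open>Constructed projections\<close>

definition hp :: "'a::{ordered_real_vector,conditionally_complete_lattice} \<Rightarrow> 'a \<Rightarrow> 'a" where
  "hp v p = Sup (range (\<lambda>k. inf p (nmul k v)))"

lemma hp_bdd: "bdd_above (range (\<lambda>k. inf (p::'a::{ordered_real_vector,conditionally_complete_lattice}) (nmul k v)))"
  by (rule bdd_aboveI[of _ p]) auto

lemma hp_upper: "inf p (nmul k v) \<le> hp v p"
  unfolding hp_def by (rule cSup_upper[OF rangeI hp_bdd])

lemma hp_least: "(\<And>k. inf p (nmul k v) \<le> u) \<Longrightarrow> hp v p \<le> u"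
  unfolding hp_def by (rule cSup_least) auto

lemma hp_ge0: "0 \<le> p \<Longrightarrow> 0 \<le> hp v p"
  using hp_upper[of p 0 v] by (simp add: inf.absorb2)

lemma hp_le: "hp v p \<le> p"
  unfolding hp_def by (rule cSup_least) auto

lemma hp_mono: "p \<le> p' \<Longrightarrow> hp v p \<le> hp v p'"
  by (rule hp_least) (meson hp_upper inf_mono order_refl order_trans)

lemma hp_disj:
  assumes p0: "0 \<le> p" and v0: "0 \<le> v"
  shows "vl_disj v (p - hp v p)"
proof -
  let ?q = "hp v p"
  let ?d = "inf (p - ?q) v"
  have pq: "0 \<le> p - ?q" using hp_le by simp
  have d0: "0 \<le> ?d" using pq v0 by simp
  have "inf p (nmul k v) \<le> ?q - ?d" for k
  proof -
    have "inf p (nmul k v) + ?d \<le> p"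
    proof -
      have "?d \<le> p - ?q" by simp
      also have "\<dots> \<le> p - inf p (nmul k v)" using hp_upper by (rule diff_left_mono)
      finally have "?d + inf p (nmul k v) \<le> p" by (simp only: le_diff_eq)
      then show ?thesis by (simp only: add.commute)
    qed
    moreover have "inf p (nmul k v) + ?d \<le> nmul (Suc k) v"
      using add_mono[OF inf_le2[of p "nmul k v"] inf_le2[of "p - ?q" v]] by (simp add: add.commute)
    ultimately have "inf p (nmul k v) + ?d \<le> inf p (nmul (Suc k) v)" by simp
    also have "\<dots> \<le> ?q" by (rule hp_upper)
    finally show ?thesis by (simp only: le_diff_eq)
  qed
  then have "?q \<le> ?q - ?d" by (rule hp_least)
  then have "?q + ?d \<le> ?q" by (simp only: le_diff_eq)
  then have "?d \<le> 0" by (simp only: add_le_same_cancel1)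
  then have "?d = 0" using d0 by (rule order.antisym)
  then show ?thesis unfolding vl_disj_def using abs_pos[OF v0] abs_pos[OF pq] by (simp add: inf_commute)
qed

lemma hp_in:
  assumes p0: "0 \<le> p" and v0: "0 \<le> v" and d: "vl_disj v y"
  shows "vl_disj y (hp v p)"
proof -
  have yv: "inf (vl_abs y) v = 0" using d abs_pos[OF v0] by (simp add: vl_disj_def inf_commute)
  have z: "inf (vl_abs y) (inf p (nmul k v)) = 0" for k
  proof -
    have "inf (vl_abs y) (nmul k v) = 0" by (rule inf_zero_nmul[OF abs_ge0 v0 yv])
    moreover have "inf (vl_abs y) (inf p (nmul k v)) \<le> inf (vl_abs y) (nmul k v)" by (simp add: le_infI2)
    moreover have "0 \<le> inf (vl_abs y) (inf p (nmul k v))" using p0 v0 nmul_nonneg[OF v0] abs_ge0 by simp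
    ultimately show ?thesis by simp
  qed
  have "inf (vl_abs y) (hp v p) = Sup (inf (vl_abs y) ` range (\<lambda>k. inf p (nmul k v)))"
    unfolding hp_def by (rule inf_Sup_distrib[OF _ hp_bdd]) simp
  also have "inf (vl_abs y) ` range (\<lambda>k. inf p (nmul k v)) = range (\<lambda>k. 0)" using z by (simp add: image_image)
  finally have "inf (vl_abs y) (hp v p) = 0" by simp
  then show ?thesis unfolding vl_disj_def using abs_pos[OF hp_ge0[OF p0]] by simp
qed

lemma hp_self: "0 \<le> v \<Longrightarrow> hp v v = v"
proof -
  assume v0: "0 \<le> v"
  have "inf v (nmul 1 v) \<le> hp v v" by (rule hp_upper)
  then have "v \<le> hp v v" by simp
  then show ?thesis using hp_le[of v v] by simp
qed

lemma hp_zero: "0 \<le> p \<Longrightarrow> 0 \<le> v \<Longrightarrow> inf p v = 0 \<Longrightarrow> hp v p = 0"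
proof -
  assume a: "0 \<le> p" "0 \<le> v" "inf p v = 0"
  have "hp v p \<le> 0" by (rule hp_least) (simp add: inf_zero_nmul[OF a])
  then show ?thesis using hp_ge0[OF a(1), of v] by (rule order.antisym)
qed

lemma nmul_nmul: "nmul k (nmul N x) = nmul (k * N) (x::'a::real_vector)"
  by (simp add: nmul_real)

lemma hp_mono_v:
  assumes "0 \<le> v'" "v \<le> nmul N v'"
  shows "hp v p \<le> hp v' p"
proof (rule hp_least)
  fix k
  have "nmul k v \<le> nmul k (nmul N v')" using assms(2) by (rule nmul_mono)
  then have "inf p (nmul k v) \<le> inf p (nmul (k * N) v')" by (simp add: nmul_nmul le_infI2)
  also have "\<dots> \<le> hp v' p" by (rule hp_upper)
  finally show "inf p (nmul k v) \<le> hp v' p" .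
qed

definition prj :: "'a::{ordered_real_vector,conditionally_complete_lattice} \<Rightarrow> 'a \<Rightarrow> 'a" where
  "prj v x = hp v (pp x) - hp v (nn x)"

lemma prj_bp:
  assumes v0: "0 \<le> v"
  shows "band_projection (\<lambda>x. x - prj v x)"
  unfolding band_projection_def
proof (intro exI[of _ "vl_dcompl {v}"] conjI allI)
  show "vl_band (vl_dcompl {v})" by (rule dcompl_band)
  fix x
  have "x - prj v x = (pp x - hp v (pp x)) - (nn x - hp v (nn x))"
    using pp_nn[of x] unfolding prj_def by (simp add: algebra_simps)
  moreover have "vl_disj v (pp x - hp v (pp x))" by (rule hp_disj[OF pp_ge0 v0])
  moreover have "vl_disj v (nn x - hp v (nn x))" by (rule hp_disj[OF nn_ge0 v0])
  ultimately show "x - prj v x \<in> vl_dcompl {v}" by (simp add: vl_dcompl_def disj_diff)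
  have "vl_disj y (prj v x)" if "y \<in> vl_dcompl {v}" for y
  proof -
    have "vl_disj v y" using that by (simp add: vl_dcompl_def)
    then show ?thesis unfolding prj_def using hp_in[OF pp_ge0 v0] hp_in[OF nn_ge0 v0] disj_diff by blast
  qed
  then show "x - (x - prj v x) \<in> vl_dcompl (vl_dcompl {v})" by (simp add: vl_dcompl_def)
qed

lemma prj_add: "0 \<le> v \<Longrightarrow> prj v (x + y) = prj v x + prj v y"
  using bp_add[OF prj_bp, of v x y] by (simp add: algebra_simps)

lemma prj_diff: "0 \<le> v \<Longrightarrow> prj v (x - y) = prj v x - prj v y"
  using prj_add[of v "x - y" y] by (simp add: algebra_simps)

lemma prj_nmul: "0 \<le> v \<Longrightarrow> prj v (nmul n x) = nmul n (prj v x)"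
  by (induction n) (simp_all add: prj_add, simp add: prj_def pp_def nn_def hp_zero)

lemma prj_nonneg: "0 \<le> y \<Longrightarrow> prj v y = hp v y"
proof -
  assume y: "0 \<le> y"
  have "pp y = y" using y by (simp add: pp_def sup.absorb1)
  moreover have "nn y = 0" using y by (simp add: nn_def sup.absorb2)
  moreover have "hp v 0 = 0" using hp_le[of v 0] hp_ge0[of 0 v] by simp
  ultimately show ?thesis by (simp add: prj_def)
qed

lemma prj_self: "prj (pp w) w = pp w"
proof -
  have "hp (pp w) (pp w) = pp w" by (rule hp_self[OF pp_ge0])
  moreover have "hp (pp w) (nn w) = 0" by (rule hp_zero[OF nn_ge0 pp_ge0]) (metis inf_pp_nn inf_commute)
  ultimately show ?thesis by (simp add: prj_def)
qed

lemma prj_le: "prj v x \<le> hp v (pp x)"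
  unfolding prj_def using hp_ge0[OF nn_ge0] by simp


section \<open>Uryson operators\<close>

lemma frag_ne[simp]: "fragments (x::'a::{ordered_ab_group_add,lattice}) \<noteq> {}"
  using frag_0[of x] by blast

lemma ury_oa: "uryson T \<Longrightarrow> orth_additive T" by (simp add: uryson_def)

lemma oa_0: "orth_additive (T::'a::{ordered_ab_group_add,lattice} \<Rightarrow> 'b::ab_group_add) \<Longrightarrow> T 0 = 0"
proof -
  assume a: "orth_additive T"
  have "T (0 + 0) = T 0 + T 0" using a disj_0 unfolding orth_additive_def by blast
  then show ?thesis by simp
qed

lemma oa_frag: "orth_additive T \<Longrightarrow> z \<in> fragments x \<Longrightarrow> T x = T z + T (x - z)"
proof -
  assume a: "orth_additive T" "z \<in> fragments x"
  have "T (z + (x - z)) = T z + T (x - z)" using a unfolding orth_additive_def fragments_def by blast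
  then show ?thesis by simp
qed

lemma abs_interval:
  fixes x :: "'a::{ordered_ab_group_add,lattice}"
  assumes "a \<le> x" "x \<le> b"
  shows "vl_abs x \<le> vl_abs a + vl_abs b"
proof (rule abs_leI)
  have "x \<le> vl_abs b" using assms(2) abs_ge_self(1)[of b] by (rule order_trans)
  then show "x \<le> vl_abs a + vl_abs b" using abs_ge0[of a] by (simp add: add_increasing)
  have "- x \<le> - a" using assms(1) by (simp only: neg_le_iff_le)
  then have "- x \<le> vl_abs a" using abs_ge_self(2)[of a] by (rule order_trans)
  then show "- x \<le> vl_abs a + vl_abs b" using abs_ge0[of b] by (simp add: add_increasing2)
qed

lemma ury_bdd:
  fixes T :: "'a::{ordered_real_vector,lattice} \<Rightarrow> 'b::{ordered_real_vector,lattice}"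
  assumes "uryson T" "X \<subseteq> {a..b}"
  shows "\<exists>lo hi. \<forall>x\<in>X. \<forall>z\<in>fragments x. lo \<le> T z \<and> T z \<le> hi"
proof -
  let ?c = "vl_abs a + vl_abs b"
  have "order_bounded_set {- ?c..?c}" unfolding order_bounded_set_def by blast
  then have "order_bounded_set (T ` {- ?c..?c})" using assms(1) by (simp add: uryson_def order_bounded_op_def)
  then obtain lo hi where lh: "T ` {- ?c..?c} \<subseteq> {lo..hi}" unfolding order_bounded_set_def by blast
  have "lo \<le> T z \<and> T z \<le> hi" if "x \<in> X" "z \<in> fragments x" for x z
  proof -
    have "vl_abs x \<le> ?c" using assms(2) that(1) by (intro abs_interval) auto
    moreover have "- vl_abs x \<le> z \<and> z \<le> vl_abs x" by (rule frag_bounds[OF that(2)])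
    ultimately have c1: "vl_abs x \<le> ?c" and f1: "- vl_abs x \<le> z" and f2: "z \<le> vl_abs x" by simp_all
    have c2: "- ?c \<le> - vl_abs x" using c1 by (simp only: neg_le_iff_le)
    have "- ?c \<le> z" by (rule order_trans[OF c2 f1])
    moreover have "z \<le> ?c" by (rule order_trans[OF f2 c1])
    ultimately have "z \<in> {- ?c..?c}" by simp
    then have "T z \<in> {lo..hi}" using lh by blast
    then show ?thesis by simp
  qed
  then show ?thesis by blast
qed

lemma ury_bdd_pt:
  fixes T :: "'a::{ordered_real_vector,lattice} \<Rightarrow> 'b::{ordered_real_vector,lattice}"
  assumes "uryson T"
  shows "\<exists>lo hi. \<forall>z\<in>fragments x. lo \<le> T z \<and> T z \<le> hi"
  using ury_bdd[OF assms, of "{x}" x x] by auto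

definition Uinf :: "('a::{ordered_real_vector,lattice} \<Rightarrow> 'b::{ordered_real_vector,conditionally_complete_lattice})
   \<Rightarrow> ('a \<Rightarrow> 'b) \<Rightarrow> 'a \<Rightarrow> 'b" where
  "Uinf P Q x = Inf ((\<lambda>y. P y + Q (x - y)) ` fragments x)"

definition Usup :: "('a::{ordered_real_vector,lattice} \<Rightarrow> 'b::{ordered_real_vector,conditionally_complete_lattice})
   \<Rightarrow> ('a \<Rightarrow> 'b) \<Rightarrow> 'a \<Rightarrow> 'b" where
  "Usup P Q x = Sup ((\<lambda>y. P y + Q (x - y)) ` fragments x)"

lemma UPQ_bdd:
  fixes P Q :: "'a::{ordered_real_vector,lattice} \<Rightarrow> 'b::{ordered_real_vector,conditionally_complete_lattice}"
  assumes "uryson P" "uryson Q"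
  shows "bdd_below ((\<lambda>y. P y + Q (x - y)) ` fragments x)" "bdd_above ((\<lambda>y. P y + Q (x - y)) ` fragments x)"
proof -
  obtain lo1 hi1 where 1: "\<forall>z\<in>fragments x. lo1 \<le> P z \<and> P z \<le> hi1" using ury_bdd_pt[OF assms(1)] by blast
  obtain lo2 hi2 where 2: "\<forall>z\<in>fragments x. lo2 \<le> Q z \<and> Q z \<le> hi2" using ury_bdd_pt[OF assms(2)] by blast
  have "y \<in> fragments x \<Longrightarrow> x - y \<in> fragments x" for y by (rule frag_compl)
  then show "bdd_below ((\<lambda>y. P y + Q (x - y)) ` fragments x)"
    using 1 2 by (auto intro!: bdd_belowI[of _ "lo1 + lo2"] add_mono)
  show "bdd_above ((\<lambda>y. P y + Q (x - y)) ` fragments x)"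
    using 1 2 frag_compl by (auto intro!: bdd_aboveI[of _ "hi1 + hi2"] add_mono)
qed

lemma Uinf_le1: "uryson P \<Longrightarrow> uryson Q \<Longrightarrow> Uinf P Q x \<le> P x"
proof -
  assume a: "uryson P" "uryson Q"
  have m: "P x + Q (x - x) \<in> (\<lambda>y. P y + Q (x - y)) ` fragments x" by (rule imageI) simp
  have "Uinf P Q x \<le> P x + Q (x - x)" unfolding Uinf_def by (rule cInf_lower[OF m UPQ_bdd(1)[OF a]])
  then show ?thesis by (simp add: oa_0 ury_oa a)
qed

lemma Uinf_le2: "uryson P \<Longrightarrow> uryson Q \<Longrightarrow> Uinf P Q x \<le> Q x"
proof -
  assume a: "uryson P" "uryson Q"
  have m: "P 0 + Q (x - 0) \<in> (\<lambda>y. P y + Q (x - y)) ` fragments x" by (rule imageI) simp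
  have "Uinf P Q x \<le> P 0 + Q (x - 0)" unfolding Uinf_def by (rule cInf_lower[OF m UPQ_bdd(1)[OF a]])
  then show ?thesis by (simp add: oa_0 ury_oa a)
qed

lemma Uinf_greatest:
  assumes "orth_additive R" "\<And>x. R x \<le> P x" "\<And>x. R x \<le> Q x"
  shows "R x \<le> Uinf P Q x"
  unfolding Uinf_def
proof (rule cInf_greatest)
  show "(\<lambda>y. P y + Q (x - y)) ` fragments x \<noteq> {}" by auto
  fix w assume "w \<in> (\<lambda>y. P y + Q (x - y)) ` fragments x"
  then obtain y where y: "y \<in> fragments x" "w = P y + Q (x - y)" by auto
  have "R x = R y + R (x - y)" by (rule oa_frag[OF assms(1) y(1)])
  also have "\<dots> \<le> P y + Q (x - y)" using assms(2,3) by (rule add_mono)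
  finally show "R x \<le> w" using y by simp
qed

lemma Usup_ge1: "uryson P \<Longrightarrow> uryson Q \<Longrightarrow> P x \<le> Usup P Q x"
proof -
  assume a: "uryson P" "uryson Q"
  have m: "P x + Q (x - x) \<in> (\<lambda>y. P y + Q (x - y)) ` fragments x" by (rule imageI) simp
  have "P x + Q (x - x) \<le> Usup P Q x" unfolding Usup_def by (rule cSup_upper[OF m UPQ_bdd(2)[OF a]])
  then show ?thesis by (simp add: oa_0 ury_oa a)
qed

lemma Usup_ge2: "uryson P \<Longrightarrow> uryson Q \<Longrightarrow> Q x \<le> Usup P Q x"
proof -
  assume a: "uryson P" "uryson Q"
  have m: "P 0 + Q (x - 0) \<in> (\<lambda>y. P y + Q (x - y)) ` fragments x" by (rule imageI) simp
  have "P 0 + Q (x - 0) \<le> Usup P Q x" unfolding Usup_def by (rule cSup_upper[OF m UPQ_bdd(2)[OF a]])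
  then show ?thesis by (simp add: oa_0 ury_oa a)
qed

lemma Usup_least:
  assumes "orth_additive R" "\<And>x. P x \<le> R x" "\<And>x. Q x \<le> R x"
  shows "Usup P Q x \<le> R x"
  unfolding Usup_def
proof (rule cSup_least)
  show "(\<lambda>y. P y + Q (x - y)) ` fragments x \<noteq> {}" by auto
  fix w assume "w \<in> (\<lambda>y. P y + Q (x - y)) ` fragments x"
  then obtain y where y: "y \<in> fragments x" "w = P y + Q (x - y)" by auto
  have "P y + Q (x - y) \<le> R y + R (x - y)" using assms(2,3) by (rule add_mono)
  also have "\<dots> = R x" by (rule oa_frag[OF assms(1) y(1), symmetric])
  finally show "w \<le> R x" using y by simp
qed

lemma frag_image_split:
  fixes P Q :: "'a::{ordered_real_vector,lattice} \<Rightarrow> 'b::{ordered_real_vector,lattice}"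
  assumes "orth_additive P" "orth_additive Q" "vl_disj u v"
  shows "(\<lambda>y. P y + Q (u + v - y)) ` fragments (u + v) =
    {(P a + Q (u - a)) + (P b + Q (v - b)) |a b. a \<in> fragments u \<and> b \<in> fragments v}"
proof -
  have key: "P (a + b) + Q (u + v - (a + b)) = (P a + Q (u - a)) + (P b + Q (v - b))"
    if "a \<in> fragments u" "b \<in> fragments v" for a b
  proof -
    have e1: "P (a + b) = P a + P b" using assms(1) frag_add(2)[OF assms(3) that]
      by (simp add: orth_additive_def)
    have e2: "Q ((u - a) + (v - b)) = Q (u - a) + Q (v - b)" using assms(2) frag_add(3)[OF assms(3) that]
      by (simp add: orth_additive_def)
    have e3: "u + v - (a + b) = (u - a) + (v - b)" by (simp add: algebra_simps)
    show ?thesis unfolding e3 e1 e2 by (simp only: add_ac)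
  qed
  show ?thesis
  proof (intro set_eqI iffI)
    fix w assume "w \<in> (\<lambda>y. P y + Q (u + v - y)) ` fragments (u + v)"
    then obtain z where z: "z \<in> fragments (u + v)" "w = P z + Q (u + v - z)" by auto
    obtain a b where ab: "a \<in> fragments u" "b \<in> fragments v" "z = a + b" using frag_split[OF assms(3) z(1)] by blast
    show "w \<in> {(P a + Q (u - a)) + (P b + Q (v - b)) |a b. a \<in> fragments u \<and> b \<in> fragments v}"
      using key[OF ab(1,2)] z(2) ab by blast
  next
    fix w assume "w \<in> {(P a + Q (u - a)) + (P b + Q (v - b)) |a b. a \<in> fragments u \<and> b \<in> fragments v}"
    then obtain a b where ab: "a \<in> fragments u" "b \<in> fragments v" "w = (P a + Q (u - a)) + (P b + Q (v - b))"
      by blast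
    have "a + b \<in> fragments (u + v)" by (rule frag_add(1)[OF assms(3) ab(1,2)])
    then have "P (a + b) + Q (u + v - (a + b)) \<in> (\<lambda>y. P y + Q (u + v - y)) ` fragments (u + v)"
      by (rule imageI)
    then show "w \<in> (\<lambda>y. P y + Q (u + v - y)) ` fragments (u + v)"
      using key[OF ab(1,2)] ab(3) by simp
  qed
qed

lemma Uinf_oa:
  assumes "uryson P" "uryson Q"
  shows "orth_additive (Uinf P Q)"
  unfolding orth_additive_def
proof (intro allI impI)
  fix u v :: 'a assume uv: "vl_disj u v"
  have "Uinf P Q (u + v) = Inf {(P a + Q (u - a)) + (P b + Q (v - b)) |a b. a \<in> fragments u \<and> b \<in> fragments v}"
    unfolding Uinf_def frag_image_split[OF ury_oa[OF assms(1)] ury_oa[OF assms(2)] uv] ..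
  also have "\<dots> = Uinf P Q u + Uinf P Q v" unfolding Uinf_def
    by (rule Inf_sumset) (auto intro: UPQ_bdd[OF assms])
  finally show "Uinf P Q (u + v) = Uinf P Q u + Uinf P Q v" .
qed

lemma Usup_oa:
  assumes "uryson P" "uryson Q"
  shows "orth_additive (Usup P Q)"
  unfolding orth_additive_def
proof (intro allI impI)
  fix u v :: 'a assume uv: "vl_disj u v"
  have "Usup P Q (u + v) = Sup {(P a + Q (u - a)) + (P b + Q (v - b)) |a b. a \<in> fragments u \<and> b \<in> fragments v}"
    unfolding Usup_def frag_image_split[OF ury_oa[OF assms(1)] ury_oa[OF assms(2)] uv] ..
  also have "\<dots> = Usup P Q u + Usup P Q v" unfolding Usup_def
    by (rule Sup_sumset) (auto intro: UPQ_bdd[OF assms])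
  finally show "Usup P Q (u + v) = Usup P Q u + Usup P Q v" .
qed

lemma Uinf_ury:
  assumes "uryson P" "uryson Q"
  shows "uryson (Uinf P Q)"
  unfolding uryson_def
proof (intro conjI)
  show "orth_additive (Uinf P Q)" by (rule Uinf_oa[OF assms])
  show "order_bounded_op (Uinf P Q)" unfolding order_bounded_op_def
  proof (intro allI impI)
    fix X :: "'a set" assume "order_bounded_set X"
    then obtain a b where X: "X \<subseteq> {a..b}" unfolding order_bounded_set_def by blast
    obtain lo1 hi1 where 1: "\<forall>x\<in>X. \<forall>z\<in>fragments x. lo1 \<le> P z \<and> P z \<le> hi1" using ury_bdd[OF assms(1) X] by blast
    obtain lo2 hi2 where 2: "\<forall>x\<in>X. \<forall>z\<in>fragments x. lo2 \<le> Q z \<and> Q z \<le> hi2" using ury_bdd[OF assms(2) X] by blast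
    have "lo1 + lo2 \<le> Uinf P Q x \<and> Uinf P Q x \<le> hi1" if x: "x \<in> X" for x
    proof
      show "Uinf P Q x \<le> hi1" using Uinf_le1[OF assms, of x] 1 x frag_self by (blast intro: order_trans)
      show "lo1 + lo2 \<le> Uinf P Q x" unfolding Uinf_def
      proof (rule cInf_greatest)
        show "(\<lambda>y. P y + Q (x - y)) ` fragments x \<noteq> {}" by simp
        fix w assume "w \<in> (\<lambda>y. P y + Q (x - y)) ` fragments x"
        then obtain y where y: "y \<in> fragments x" "w = P y + Q (x - y)" by auto
        have "lo1 \<le> P y" using 1 x y(1) by blast
        moreover have "lo2 \<le> Q (x - y)" using 2 x frag_compl[OF y(1)] by blast
        ultimately show "lo1 + lo2 \<le> w" using y(2) by (simp add: add_mono)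
      qed
    qed
    then have "Uinf P Q ` X \<subseteq> {lo1 + lo2..hi1}" by auto
    then show "order_bounded_set (Uinf P Q ` X)" unfolding order_bounded_set_def by blast
  qed
qed

lemma Usup_ury:
  assumes "uryson P" "uryson Q"
  shows "uryson (Usup P Q)"
  unfolding uryson_def
proof (intro conjI)
  show "orth_additive (Usup P Q)" by (rule Usup_oa[OF assms])
  show "order_bounded_op (Usup P Q)" unfolding order_bounded_op_def
  proof (intro allI impI)
    fix X :: "'a set" assume "order_bounded_set X"
    then obtain a b where X: "X \<subseteq> {a..b}" unfolding order_bounded_set_def by blast
    obtain lo1 hi1 where 1: "\<forall>x\<in>X. \<forall>z\<in>fragments x. lo1 \<le> P z \<and> P z \<le> hi1" using ury_bdd[OF assms(1) X] by blast
    obtain lo2 hi2 where 2: "\<forall>x\<in>X. \<forall>z\<in>fragments x. lo2 \<le> Q z \<and> Q z \<le> hi2" using ury_bdd[OF assms(2) X] by blast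
    have "lo1 \<le> Usup P Q x \<and> Usup P Q x \<le> hi1 + hi2" if x: "x \<in> X" for x
    proof
      show "lo1 \<le> Usup P Q x" using Usup_ge1[OF assms, of x] 1 x frag_self by (blast intro: order_trans)
      show "Usup P Q x \<le> hi1 + hi2" unfolding Usup_def
      proof (rule cSup_least)
        show "(\<lambda>y. P y + Q (x - y)) ` fragments x \<noteq> {}" by simp
        fix w assume "w \<in> (\<lambda>y. P y + Q (x - y)) ` fragments x"
        then obtain y where y: "y \<in> fragments x" "w = P y + Q (x - y)" by auto
        have "P y \<le> hi1" using 1 x y(1) by blast
        moreover have "Q (x - y) \<le> hi2" using 2 x frag_compl[OF y(1)] by blast
        ultimately show "w \<le> hi1 + hi2" using y(2) by (simp add: add_mono)
      qed
    qed
    then have "Usup P Q ` X \<subseteq> {lo1..hi1 + hi2}" by auto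
    then show "order_bounded_set (Usup P Q ` X)" unfolding order_bounded_set_def by blast
  qed
qed

lemma ury_zero: "uryson (\<lambda>x::'a::{ordered_real_vector,lattice}. 0::'b::{ordered_real_vector,lattice})"
proof -
  have "order_bounded_set ((\<lambda>x. 0::'b) ` X)" for X :: "'a set"
    unfolding order_bounded_set_def by (rule exI[of _ 0], rule exI[of _ 0]) auto
  then show ?thesis unfolding uryson_def orth_additive_def order_bounded_op_def by simp
qed

lemma ury_add:
  fixes S T :: "'a::{ordered_real_vector,lattice} \<Rightarrow> 'b::{ordered_real_vector,lattice}"
  assumes "uryson S" "uryson T" shows "uryson (\<lambda>x. S x + T x)"
  unfolding uryson_def
proof (intro conjI)
  show "orth_additive (\<lambda>x. S x + T x)" unfolding orth_additive_def
  proof (intro allI impI)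
    fix x y :: 'a assume "vl_disj x y"
    then have "S (x + y) = S x + S y" "T (x + y) = T x + T y"
      using assms unfolding uryson_def orth_additive_def by blast+
    then show "S (x + y) + T (x + y) = S x + T x + (S y + T y)" by (simp add: add_ac)
  qed
  show "order_bounded_op (\<lambda>x. S x + T x)" unfolding order_bounded_op_def
  proof (intro allI impI)
    fix X :: "'a set" assume X: "order_bounded_set X"
    have "order_bounded_set (S ` X)" using assms(1) X by (simp add: uryson_def order_bounded_op_def)
    then obtain a1 b1 where 1: "S ` X \<subseteq> {a1..b1}" unfolding order_bounded_set_def by blast
    have "order_bounded_set (T ` X)" using assms(2) X by (simp add: uryson_def order_bounded_op_def)
    then obtain a2 b2 where 2: "T ` X \<subseteq> {a2..b2}" unfolding order_bounded_set_def by blast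
    have "(\<lambda>x. S x + T x) ` X \<subseteq> {a1 + a2..b1 + b2}"
    proof (rule image_subsetI)
      fix x assume "x \<in> X"
      then have "S x \<in> {a1..b1}" "T x \<in> {a2..b2}" using 1 2 by auto
      then show "S x + T x \<in> {a1 + a2..b1 + b2}" by (simp add: add_mono)
    qed
    then show "order_bounded_set ((\<lambda>x. S x + T x) ` X)" unfolding order_bounded_set_def by blast
  qed
qed

lemma ury_neg:
  fixes S :: "'a::{ordered_real_vector,lattice} \<Rightarrow> 'b::{ordered_real_vector,lattice}"
  assumes "uryson S" shows "uryson (\<lambda>x. - S x)"
  unfolding uryson_def
proof (intro conjI)
  show "orth_additive (\<lambda>x. - S x)" unfolding orth_additive_def
  proof (intro allI impI)
    fix x y :: 'a assume "vl_disj x y"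
    then have "S (x + y) = S x + S y"
      using assms unfolding uryson_def orth_additive_def by blast
    then show "- S (x + y) = - S x + - S y" by simp
  qed
  show "order_bounded_op (\<lambda>x. - S x)" unfolding order_bounded_op_def
  proof (intro allI impI)
    fix X :: "'a set" assume X: "order_bounded_set X"
    have "order_bounded_set (S ` X)" using assms(1) X by (simp add: uryson_def order_bounded_op_def)
    then obtain a1 b1 where 1: "S ` X \<subseteq> {a1..b1}" unfolding order_bounded_set_def by blast
    have "(\<lambda>x. - S x) ` X \<subseteq> {- b1..- a1}"
    proof (rule image_subsetI)
      fix x assume "x \<in> X"
      then have "S x \<in> {a1..b1}" using 1 by auto
      then show "- S x \<in> {- b1..- a1}" by simp
    qed
    then show "order_bounded_set ((\<lambda>x. - S x) ` X)" unfolding order_bounded_set_def by blast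
  qed
qed

lemma ury_diff:
  fixes S T :: "'a::{ordered_real_vector,lattice} \<Rightarrow> 'b::{ordered_real_vector,lattice}"
  assumes "uryson S" "uryson T" shows "uryson (\<lambda>x. S x - T x)"
  using ury_add[OF assms(1) ury_neg[OF assms(2)]] by simp


typedef (overloaded) ('a::"{ordered_real_vector,lattice}", 'b::"{ordered_real_vector,conditionally_complete_lattice}") ury
  = "{T::'a \<Rightarrow> 'b. uryson T}"
  by (rule exI[of _ "\<lambda>x. 0"]) (simp add: ury_zero)

setup_lifting type_definition_ury

instantiation ury :: ("{ordered_real_vector,lattice}", "{ordered_real_vector,conditionally_complete_lattice}") ordered_ab_group_add
begin

lift_definition zero_ury :: "('a,'b) ury" is "\<lambda>x. 0" by (rule ury_zero)
lift_definition plus_ury :: "('a,'b) ury \<Rightarrow> ('a,'b) ury \<Rightarrow> ('a,'b) ury" is "\<lambda>S T x. S x + T x" by (rule ury_add)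
lift_definition minus_ury :: "('a,'b) ury \<Rightarrow> ('a,'b) ury \<Rightarrow> ('a,'b) ury" is "\<lambda>S T x. S x - T x" by (rule ury_diff)
lift_definition uminus_ury :: "('a,'b) ury \<Rightarrow> ('a,'b) ury" is "\<lambda>S x. - S x" by (rule ury_neg)
lift_definition less_eq_ury :: "('a,'b) ury \<Rightarrow> ('a,'b) ury \<Rightarrow> bool" is "\<lambda>S T. \<forall>x. S x \<le> T x" .
definition less_ury :: "('a,'b) ury \<Rightarrow> ('a,'b) ury \<Rightarrow> bool" where "less_ury S T \<longleftrightarrow> S \<le> T \<and> \<not> T \<le> S"

instance
proof
  fix a b c :: "('a,'b) ury"
  show "a + b + c = a + (b + c)" by transfer (simp add: add.assoc)
  show "a + b = b + a" by transfer (simp add: add.commute)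
  show "0 + a = a" by transfer simp
  show "- a + a = 0" by transfer simp
  show "a - b = a + - b" by transfer simp
  show "a < b \<longleftrightarrow> a \<le> b \<and> \<not> b \<le> a" by (simp add: less_ury_def)
  show "a \<le> a" by transfer simp
  show "a \<le> b \<Longrightarrow> b \<le> c \<Longrightarrow> a \<le> c" by transfer (blast intro: order_trans)
  show "a \<le> b \<Longrightarrow> b \<le> a \<Longrightarrow> a = b" by transfer (simp add: fun_eq_iff order.antisym)
  show "a \<le> b \<Longrightarrow> c + a \<le> c + b" by transfer (simp add: add_left_mono)
qed

end

instantiation ury :: ("{ordered_real_vector,lattice}", "{ordered_real_vector,conditionally_complete_lattice}") lattice
begin

lift_definition inf_ury :: "('a,'b) ury \<Rightarrow> ('a,'b) ury \<Rightarrow> ('a,'b) ury" is Uinf by (rule Uinf_ury)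
lift_definition sup_ury :: "('a,'b) ury \<Rightarrow> ('a,'b) ury \<Rightarrow> ('a,'b) ury" is Usup by (rule Usup_ury)

instance
proof
  fix a b c :: "('a,'b) ury"
  show "inf a b \<le> a" by transfer (simp add: Uinf_le1)
  show "inf a b \<le> b" by transfer (simp add: Uinf_le2)
  show "a \<le> b \<Longrightarrow> a \<le> c \<Longrightarrow> a \<le> inf b c" by transfer (simp add: Uinf_greatest ury_oa)
  show "a \<le> sup a b" by transfer (simp add: Usup_ge1)
  show "b \<le> sup a b" by transfer (simp add: Usup_ge2)
  show "b \<le> a \<Longrightarrow> c \<le> a \<Longrightarrow> sup b c \<le> a" by transfer (simp add: Usup_least ury_oa)
qed

end

lemma U_le_iff: "U_le S T \<longleftrightarrow> (\<forall>x. S x \<le> T x)"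
  by (simp add: U_le_def positive_op_def)

lemma U_inf_eq:
  assumes "uryson P" "uryson Q"
  shows "U_inf P Q = Uinf P Q"
  unfolding U_inf_def
proof (rule the_equality)
  show "uryson (Uinf P Q) \<and> U_le (Uinf P Q) P \<and> U_le (Uinf P Q) Q \<and>
     (\<forall>Qa. uryson Qa \<and> U_le Qa P \<and> U_le Qa Q \<longrightarrow> U_le Qa (Uinf P Q))"
    using assms by (simp add: U_le_iff Uinf_ury Uinf_le1 Uinf_le2 Uinf_greatest ury_oa)
  fix R assume R: "uryson R \<and> U_le R P \<and> U_le R Q \<and> (\<forall>Qa. uryson Qa \<and> U_le Qa P \<and> U_le Qa Q \<longrightarrow> U_le Qa R)"
  have 1: "\<forall>x. R x \<le> Uinf P Q x" using R by (simp add: U_le_iff Uinf_greatest ury_oa)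
  have 2: "\<forall>x. Uinf P Q x \<le> R x" using R assms by (simp add: U_le_iff Uinf_ury Uinf_le1 Uinf_le2)
  show "R = Uinf P Q" using 1 2 by (simp add: fun_eq_iff order.antisym)
qed

lemma U_sup_eq:
  assumes "uryson P" "uryson Q"
  shows "U_sup P Q = Usup P Q"
  unfolding U_sup_def
proof (rule the_equality)
  show "uryson (Usup P Q) \<and> U_le P (Usup P Q) \<and> U_le Q (Usup P Q) \<and>
     (\<forall>Qa. uryson Qa \<and> U_le P Qa \<and> U_le Q Qa \<longrightarrow> U_le (Usup P Q) Qa)"
    using assms by (simp add: U_le_iff Usup_ury Usup_ge1 Usup_ge2 Usup_least ury_oa)
  fix R assume R: "uryson R \<and> U_le P R \<and> U_le Q R \<and> (\<forall>Qa. uryson Qa \<and> U_le P Qa \<and> U_le Q Qa \<longrightarrow> U_le R Qa)"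
  have 1: "\<forall>x. Usup P Q x \<le> R x" using R by (simp add: U_le_iff Usup_least ury_oa)
  have 2: "\<forall>x. R x \<le> Usup P Q x" using R assms by (simp add: U_le_iff Usup_ury Usup_ge1 Usup_ge2)
  show "R = Usup P Q" using 1 2 by (simp add: fun_eq_iff order.antisym)
qed

lemma ury_Rep: "uryson (Rep_ury a)" using Rep_ury by simp

lemma Rep_inf: "Rep_ury (inf a b) = U_inf (Rep_ury a) (Rep_ury b)"
  by (simp add: U_inf_eq ury_Rep inf_ury.rep_eq)

lemma Rep_sup: "Rep_ury (sup a b) = U_sup (Rep_ury a) (Rep_ury b)"
  by (simp add: U_sup_eq ury_Rep sup_ury.rep_eq)

lemma U_abs_Rep: "U_abs (Rep_ury a) = Rep_ury (vl_abs a)"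
proof -
  have "(\<lambda>x. - Rep_ury a x) = Rep_ury (- a)" by (simp add: uminus_ury.rep_eq fun_eq_iff)
  then show ?thesis by (simp add: U_abs_def vl_abs_def Rep_sup)
qed

lemma U_disj_Rep: "U_disj (Rep_ury a) (Rep_ury b) \<longleftrightarrow> vl_disj a b"
proof -
  have "(\<lambda>x. 0) = Rep_ury (0::('a,'b) ury)" by (simp add: zero_ury.rep_eq fun_eq_iff)
  then have "U_disj (Rep_ury a) (Rep_ury b) \<longleftrightarrow> Rep_ury (inf (vl_abs a) (vl_abs b)) = Rep_ury 0"
    by (simp add: U_disj_def U_abs_Rep Rep_inf)
  also have "\<dots> \<longleftrightarrow> inf (vl_abs a) (vl_abs b) = 0" by (rule Rep_ury_inject)
  finally show ?thesis by (simp add: vl_disj_def)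
qed

lemma le_ury_iff: "a \<le> b \<longleftrightarrow> (\<forall>x. Rep_ury a x \<le> Rep_ury b x)"
  by transfer simp

lemma Rep_plus: "Rep_ury (a + b) x = Rep_ury a x + Rep_ury b x"
  by transfer simp

lemma Rep_minus: "Rep_ury (a - b) x = Rep_ury a x - Rep_ury b x"
  by transfer simp

lemma Rep_zero: "Rep_ury 0 x = 0"
  by transfer simp

lemma Rep_nmul: "Rep_ury (nmul n a) x = nmul n (Rep_ury a x)"
  by (induction n) (simp_all add: Rep_plus Rep_zero)


lemma nmul_zero[simp]: "nmul n (0::'a::ab_group_add) = 0"
  by (induction n) simp_all

lemma Uplus_D: "S \<in> U_plus \<Longrightarrow> uryson S" "S \<in> U_plus \<Longrightarrow> 0 \<le> S x"
  by (simp_all add: U_plus_def positive_op_def)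

lemma T_frag_le:
  assumes "T \<in> U_plus" "f \<in> fragments e"
  shows "T f \<le> T e"
proof -
  have "T e = T f + T (e - f)" by (rule oa_frag[OF ury_oa[OF Uplus_D(1)[OF assms(1)]] assms(2)])
  moreover have "0 \<le> T (e - f)" by (rule Uplus_D(2)[OF assms(1)])
  ultimately show ?thesis by simp
qed

definition Vf :: "('a::{ordered_real_vector,lattice} \<Rightarrow> 'b::{ordered_real_vector,conditionally_complete_lattice})
    \<Rightarrow> ('a \<Rightarrow> 'b) \<Rightarrow> 'a \<Rightarrow> nat \<Rightarrow> 'b" where
  "Vf T S e n = Sup ((\<lambda>f. T f - nmul n (S f)) ` fragments e)"

definition Mset :: "('a::{ordered_real_vector,lattice} \<Rightarrow> 'b::{ordered_real_vector,conditionally_complete_lattice})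
    \<Rightarrow> ('a \<Rightarrow> 'b) \<Rightarrow> 'a \<Rightarrow> real \<Rightarrow> 'b set" where
  "Mset T S e \<epsilon> = {\<rho> (T f) | f \<rho>. f \<in> fragments e \<and> band_projection \<rho> \<and> \<rho> (S f) \<le> \<epsilon> *\<^sub>R S e}"

lemma Vset_bdd:
  assumes "T \<in> U_plus" "S \<in> U_plus"
  shows "bdd_above ((\<lambda>f. T f - nmul n (S f)) ` fragments e)"
proof (rule bdd_aboveI[of _ "T e"])
  fix w assume "w \<in> (\<lambda>f. T f - nmul n (S f)) ` fragments e"
  then obtain f where f: "f \<in> fragments e" "w = T f - nmul n (S f)" by auto
  have "0 \<le> nmul n (S f)" by (rule nmul_nonneg[OF Uplus_D(2)[OF assms(2)]])
  then have "w \<le> T f" using f(2) by simp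
  also have "T f \<le> T e" by (rule T_frag_le[OF assms(1) f(1)])
  finally show "w \<le> T e" .
qed

lemma Vf_upper:
  assumes "T \<in> U_plus" "S \<in> U_plus" "f \<in> fragments e"
  shows "T f - nmul n (S f) \<le> Vf T S e n"
  unfolding Vf_def by (rule cSup_upper[OF imageI[OF assms(3)] Vset_bdd[OF assms(1,2)]])

lemma Vf_ge0:
  assumes "T \<in> U_plus" "S \<in> U_plus"
  shows "0 \<le> Vf T S e n"
proof -
  have "T 0 - nmul n (S 0) \<le> Vf T S e n" by (rule Vf_upper[OF assms frag_0])
  then show ?thesis using oa_0[OF ury_oa[OF Uplus_D(1)[OF assms(1)]]]
    oa_0[OF ury_oa[OF Uplus_D(1)[OF assms(2)]]] by simp
qed

lemma Vf_le:
  assumes "T \<in> U_plus" "S \<in> U_plus"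
  shows "Vf T S e n \<le> T e"
  unfolding Vf_def
proof (rule cSup_least)
  show "(\<lambda>f. T f - nmul n (S f)) ` fragments e \<noteq> {}" by simp
  fix w assume "w \<in> (\<lambda>f. T f - nmul n (S f)) ` fragments e"
  then obtain f where f: "f \<in> fragments e" "w = T f - nmul n (S f)" by auto
  have "0 \<le> nmul n (S f)" by (rule nmul_nonneg[OF Uplus_D(2)[OF assms(2)]])
  then have "w \<le> T f" using f(2) by simp
  also have "T f \<le> T e" by (rule T_frag_le[OF assms(1) f(1)])
  finally show "w \<le> T e" .
qed

lemma Mset_ne:
  fixes T S :: "'a::{ordered_real_vector,lattice} \<Rightarrow> 'b::{ordered_real_vector,conditionally_complete_lattice}"
  assumes "T \<in> U_plus" "S \<in> U_plus" "0 \<le> \<epsilon>"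
  shows "0 \<in> Mset T S e \<epsilon>"
proof -
  have T0: "T 0 = 0" by (rule oa_0[OF ury_oa[OF Uplus_D(1)[OF assms(1)]]])
  have S0: "S 0 = 0" by (rule oa_0[OF ury_oa[OF Uplus_D(1)[OF assms(2)]]])
  have "0 \<le> \<epsilon> *\<^sub>R S e" using assms(3) Uplus_D(2)[OF assms(2)] by (rule scaleR_nonneg_nonneg)
  then have "\<exists>f \<rho>. 0 = \<rho> (T f) \<and> f \<in> fragments e \<and> band_projection \<rho> \<and> \<rho> (S f) \<le> \<epsilon> *\<^sub>R S e"
    by (intro exI[of _ 0] exI[of _ "\<lambda>x::'b. x"]) (use bp_id S0 T0 in simp)
  then show ?thesis unfolding Mset_def by blast
qed

lemma Mset_bdd:
  assumes "T \<in> U_plus"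
  shows "bdd_above (Mset T S e \<epsilon>)"
proof (rule bdd_aboveI[of _ "T e"])
  fix w assume "w \<in> Mset T S e \<epsilon>"
  then obtain f \<rho> where f: "f \<in> fragments e" "band_projection \<rho>" "w = \<rho> (T f)" unfolding Mset_def by blast
  have "w \<le> pp (T f)" using bp_le_pp[OF f(2)] f(3) by simp
  also have "pp (T f) = T f" using Uplus_D(2)[OF assms] by (simp add: pp_def sup.absorb1)
  also have "T f \<le> T e" by (rule T_frag_le[OF assms f(1)])
  finally show "w \<le> T e" .
qed

lemma Mf_ge0:
  assumes "T \<in> U_plus" "S \<in> U_plus" "0 \<le> \<epsilon>"
  shows "0 \<le> Sup (Mset T S e \<epsilon>)"
  by (rule cSup_upper[OF Mset_ne[OF assms] Mset_bdd[OF assms(1)]])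

lemma M_le:
  assumes T: "T \<in> U_plus" and S: "S \<in> U_plus" and e0: "0 \<le> \<epsilon>"
  shows "Sup (Mset T S e \<epsilon>) \<le> Vf T S e n + nmul n (\<epsilon> *\<^sub>R S e)"
proof (rule cSup_least)
  show "Mset T S e \<epsilon> \<noteq> {}" using Mset_ne[OF T S e0] by blast
  fix w assume "w \<in> Mset T S e \<epsilon>"
  then obtain f \<rho> where f: "f \<in> fragments e" and bp: "band_projection \<rho>" and w: "w = \<rho> (T f)"
    and le: "\<rho> (S f) \<le> \<epsilon> *\<^sub>R S e" unfolding Mset_def by blast
  have "\<rho> (T f) = \<rho> ((T f - nmul n (S f)) + nmul n (S f))" by simp
  also have "\<dots> = \<rho> (T f - nmul n (S f)) + \<rho> (nmul n (S f))" by (rule bp_add[OF bp])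
  also have "\<dots> = \<rho> (T f - nmul n (S f)) + nmul n (\<rho> (S f))" by (simp only: bp_nmul[OF bp])
  also have "\<dots> \<le> pp (T f - nmul n (S f)) + nmul n (\<epsilon> *\<^sub>R S e)"
    by (rule add_mono[OF bp_le_pp[OF bp] nmul_mono[OF le]])
  also have "pp (T f - nmul n (S f)) \<le> Vf T S e n"
    unfolding pp_def by (rule le_supI[OF Vf_upper[OF T S f] Vf_ge0[OF T S]])
  finally show "w \<le> Vf T S e n + nmul n (\<epsilon> *\<^sub>R S e)" using w by (simp add: add_right_mono)
qed

lemma small:
  fixes z s :: "'b::{ordered_real_vector,conditionally_complete_lattice}"
  assumes s0: "0 \<le> s" and h: "\<And>\<epsilon>. 0 < \<epsilon> \<Longrightarrow> z \<le> nmul n (\<epsilon> *\<^sub>R s)"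
  shows "z \<le> 0"
proof (cases "n = 0")
  case True
  then show ?thesis using h[of 1] by simp
next
  case False
  have "nmul k (pp z) \<le> s" for k
  proof (cases "k = 0")
    case True then show ?thesis using s0 by simp
  next
    case False
    let ?\<epsilon> = "1 / (real n * real k)"
    have ep: "0 < ?\<epsilon>" using False \<open>n \<noteq> 0\<close> by simp
    have "z \<le> nmul n (?\<epsilon> *\<^sub>R s)" by (rule h[OF ep])
    also have "nmul n (?\<epsilon> *\<^sub>R s) = (1 / real k) *\<^sub>R s" using \<open>n \<noteq> 0\<close> by (simp add: nmul_real)
    finally have "z \<le> (1 / real k) *\<^sub>R s" .
    then have "real k *\<^sub>R z \<le> real k *\<^sub>R ((1 / real k) *\<^sub>R s)" by (rule scaleR_left_mono) simp
    then have kz: "real k *\<^sub>R z \<le> s" using False by simp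
    have "nmul k (pp z) = real k *\<^sub>R sup z 0" by (simp add: nmul_real pp_def)
    also have "\<dots> = sup (real k *\<^sub>R z) 0" by (simp add: scaleR_sup)
    also have "\<dots> \<le> s" using kz s0 by simp
    finally show ?thesis .
  qed
  then have "pp z = 0" by (rule archimedean[OF pp_ge0])
  then show ?thesis unfolding pp_def by (metis sup.bounded_iff order_refl)
qed

lemma arch2:
  fixes z y b :: "'b::{ordered_real_vector,conditionally_complete_lattice}"
  assumes y0: "0 \<le> y" and b0: "0 \<le> b" and h: "\<And>n. z \<le> hp b (pp (y - nmul n b))"
  shows "z \<le> 0"
proof -
  let ?a = "\<lambda>n. pp (y - nmul n b)"
  let ?g = "pp z"
  have g0: "0 \<le> ?g" by (rule pp_ge0)
  have gc: "?g \<le> hp b (?a n)" for n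
    unfolding pp_def[of z] using h[of n] hp_ge0[OF pp_ge0, of b "y - nmul n b"] by (rule le_supI)
  have "inf ?g b \<le> inf (?a n) b" for n
  proof -
    have "inf ?g b \<le> inf b (hp b (?a n))" using gc[of n] by (simp add: inf_commute le_infI2 inf_mono)
    also have "inf b (hp b (?a n)) = Sup (inf b ` range (\<lambda>k. inf (?a n) (nmul k b)))"
      unfolding hp_def by (rule inf_Sup_distrib[OF _ hp_bdd]) simp
    also have "\<dots> \<le> inf (?a n) b"
      by (rule cSup_least) (auto intro: le_infI1 le_infI2)
    finally show ?thesis .
  qed
  then have "nmul n (inf ?g b) \<le> y" for n
    using order_trans[OF nmul_mono L2[OF y0 b0, of n]] by blast
  then have gb: "inf ?g b = 0" by (intro archimedean[of "inf ?g b" y]) (simp_all add: g0 b0)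
  have "?g = inf ?g (hp b (?a 1))" using gc[of 1] by (simp add: inf.absorb1)
  also have "\<dots> = Sup (inf ?g ` range (\<lambda>k. inf (?a 1) (nmul k b)))"
    unfolding hp_def by (rule inf_Sup_distrib[OF _ hp_bdd]) simp
  also have "\<dots> \<le> 0"
  proof (rule cSup_least)
    show "inf ?g ` range (\<lambda>k. inf (?a 1) (nmul k b)) \<noteq> {}" by simp
    fix w assume "w \<in> inf ?g ` range (\<lambda>k. inf (?a 1) (nmul k b))"
    then obtain k where k: "w = inf ?g (inf (?a 1) (nmul k b))" by auto
    have "w \<le> inf ?g (nmul k b)" using k by (simp add: le_infI2 inf_mono)
    also have "inf ?g (nmul k b) = 0" by (rule inf_zero_nmul[OF g0 b0 gb])
    finally show "w \<le> 0" .
  qed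
  finally have "?g \<le> 0" .
  then show ?thesis unfolding pp_def by (metis sup.bounded_iff)
qed

lemma V_le:
  fixes T S :: "'a::{ordered_real_vector,lattice} \<Rightarrow> 'b::{ordered_real_vector,conditionally_complete_lattice}"
  assumes T: "T \<in> U_plus" and S: "S \<in> U_plus" and ep: "0 < \<epsilon>"
  shows "Vf T S e n \<le> Sup (Mset T S e \<epsilon>) + hp (\<epsilon> *\<^sub>R S e) (pp (T e - nmul n (\<epsilon> *\<^sub>R S e)))"
  unfolding Vf_def
proof (rule cSup_least)
  show "(\<lambda>f. T f - nmul n (S f)) ` fragments e \<noteq> {}" by simp
  let ?b = "\<epsilon> *\<^sub>R S e"
  have b0: "0 \<le> ?b" using ep Uplus_D(2)[OF S] by (simp add: scaleR_nonneg_nonneg)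
  fix w assume "w \<in> (\<lambda>f. T f - nmul n (S f)) ` fragments e"
  then obtain f where f: "f \<in> fragments e" and w: "w = T f - nmul n (S f)" by auto
  define v where "v = pp (S f - ?b)"
  define \<pi> where "\<pi> = prj v"
  define \<rho> where "\<rho> = (\<lambda>x. x - \<pi> x)"
  have v0: "0 \<le> v" unfolding v_def by (rule pp_ge0)
  have bp: "band_projection \<rho>" unfolding \<rho>_def \<pi>_def by (rule prj_bp[OF v0])
  have Sf0: "0 \<le> S f" by (rule Uplus_D(2)[OF S])
  have pb0: "0 \<le> \<pi> ?b" unfolding \<pi>_def using prj_nonneg[OF b0, of v] hp_ge0[OF b0, of v] by simp
  have piSf: "\<pi> (S f) = v + \<pi> ?b"
  proof -
    have "\<pi> (S f) = \<pi> ((S f - ?b) + ?b)" by simp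
    also have "\<dots> = \<pi> (S f - ?b) + \<pi> ?b" unfolding \<pi>_def by (rule prj_add[OF v0])
    also have "\<pi> (S f - ?b) = v" unfolding \<pi>_def v_def by (rule prj_self)
    finally show ?thesis .
  qed
  have "\<rho> (S f) \<le> ?b"
  proof -
    have "\<rho> (S f) = S f - v - \<pi> ?b" unfolding \<rho>_def using piSf by (simp add: algebra_simps)
    also have "\<dots> \<le> S f - v" using pb0 by simp
    also have "S f - v \<le> ?b"
    proof -
      have "S f - ?b \<le> v" unfolding v_def pp_def by simp
      then have "S f \<le> v + ?b" by (simp only: diff_le_eq)
      then have "S f \<le> ?b + v" by (simp only: add.commute)
      then show "S f - v \<le> ?b" by (simp only: diff_le_eq)
    qed
    finally show ?thesis .
  qed
  then have "\<rho> (T f) \<in> Mset T S e \<epsilon>" unfolding Mset_def using f bp by blast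
  then have rM: "\<rho> (T f) \<le> Sup (Mset T S e \<epsilon>)" by (rule cSup_upper[OF _ Mset_bdd[OF T]])
  have "0 \<le> \<rho> (S f)" by (rule bp_pos(1)[OF bp Sf0])
  then have "\<pi> (S f) \<le> S f" unfolding \<rho>_def by simp
  moreover have "\<pi> ?b \<le> \<pi> (S f)" using piSf v0 by simp
  ultimately have "\<pi> ?b \<le> S f" by simp
  then have nS: "nmul n (\<pi> ?b) \<le> nmul n (S f)" by (rule nmul_mono)
  have "\<pi> (T f) - nmul n (S f) \<le> \<pi> (T f) - nmul n (\<pi> ?b)" using nS by simp
  also have "\<dots> = \<pi> (T f - nmul n ?b)" unfolding \<pi>_def by (simp add: prj_diff[OF v0] prj_nmul[OF v0])
  also have "\<dots> \<le> hp v (pp (T f - nmul n ?b))" unfolding \<pi>_def by (rule prj_le)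
  also have "\<dots> \<le> hp v (pp (T e - nmul n ?b))"
  proof (rule hp_mono)
    have "T f - nmul n ?b \<le> T e - nmul n ?b" using T_frag_le[OF T f] by simp
    then show "pp (T f - nmul n ?b) \<le> pp (T e - nmul n ?b)" unfolding pp_def by (rule sup_mono) simp
  qed
  also have "\<dots> \<le> hp ?b (pp (T e - nmul n ?b))"
  proof -
    obtain N :: nat where N: "1 / \<epsilon> \<le> real N" using real_arch_simple by blast
    have "1 \<le> real N * \<epsilon>" using N ep by (simp add: field_simps)
    have "v \<le> S f" unfolding v_def pp_def using b0 Sf0 by simp
    also have "S f \<le> S e" by (rule T_frag_le[OF S f])
    also have "S e = 1 *\<^sub>R S e" by simp
    also have "\<dots> \<le> (real N * \<epsilon>) *\<^sub>R S e"
      using \<open>1 \<le> real N * \<epsilon>\<close> Uplus_D(2)[OF S] by (rule scaleR_right_mono)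
    also have "\<dots> = nmul N ?b" by (simp add: nmul_real)
    finally show ?thesis by (rule hp_mono_v[OF b0])
  qed
  finally have pi: "\<pi> (T f) - nmul n (S f) \<le> hp ?b (pp (T e - nmul n ?b))" .
  have "w = \<rho> (T f) + (\<pi> (T f) - nmul n (S f))" unfolding w \<rho>_def by simp
  also have "\<dots> \<le> Sup (Mset T S e \<epsilon>) + hp ?b (pp (T e - nmul n ?b))" by (rule add_mono[OF rM pi])
  finally show "w \<le> Sup (Mset T S e \<epsilon>) + hp ?b (pp (T e - nmul n ?b))" .
qed


lemma frag_reflect: "(\<lambda>y. e - y) ` fragments e = fragments (e::'a::{ordered_ab_group_add,lattice})"
proof (intro set_eqI iffI)
  fix f assume "f \<in> (\<lambda>y. e - y) ` fragments e"
  then show "f \<in> fragments e" using frag_compl by blast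
next
  fix f assume f: "f \<in> fragments e"
  then have "e - f \<in> fragments e" by (rule frag_compl)
  moreover have "f = e - (e - f)" by simp
  ultimately show "f \<in> (\<lambda>y. e - y) ` fragments e" by blast
qed

lemma T_minus_Uinf:
  fixes T N :: "'a::{ordered_real_vector,lattice} \<Rightarrow> 'b::{ordered_real_vector,conditionally_complete_lattice}"
  assumes "uryson T" "uryson N"
  shows "T e - Uinf T N e = Sup ((\<lambda>f. T f - N f) ` fragments e)"
proof -
  have "T e - Uinf T N e = Sup ((\<lambda>z. T e - z) ` (\<lambda>y. T y + N (e - y)) ` fragments e)"
    unfolding Uinf_def by (rule minus_Inf) (simp_all add: UPQ_bdd[OF assms])
  also have "(\<lambda>z. T e - z) ` (\<lambda>y. T y + N (e - y)) ` fragments e = (\<lambda>y. T e - (T y + N (e - y))) ` fragments e"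
    by (simp only: image_image)
  also have "\<dots> = (\<lambda>y. T (e - y) - N (e - y)) ` fragments e"
  proof (rule image_cong[OF refl])
    fix y assume y: "y \<in> fragments e"
    show "T e - (T y + N (e - y)) = T (e - y) - N (e - y)"
      using oa_frag[OF ury_oa[OF assms(1)] y] by (simp add: algebra_simps)
  qed
  also have "\<dots> = (\<lambda>f. T f - N f) ` (\<lambda>y. e - y) ` fragments e" by (simp add: image_image)
  also have "\<dots> = (\<lambda>f. T f - N f) ` fragments e" by (simp only: frag_reflect)
  finally show ?thesis .
qed

lemma U_disj_iff:
  assumes "uryson X" "uryson Y"
  shows "U_disj X Y \<longleftrightarrow> vl_disj (Abs_ury X) (Abs_ury Y)"
  using U_disj_Rep[of "Abs_ury X" "Abs_ury Y"] assms by (simp add: Abs_ury_inverse)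

lemma Rep_Abs: "uryson X \<Longrightarrow> Rep_ury (Abs_ury X) = X"
  by (simp add: Abs_ury_inverse)

lemma Uplus_ge0: "S \<in> U_plus \<Longrightarrow> 0 \<le> Abs_ury S"
  by (simp add: le_ury_iff Rep_Abs Uplus_D Rep_zero)

lemma pi_A_char:
  fixes A :: "('a::{ordered_real_vector,lattice} \<Rightarrow> 'b::{ordered_real_vector,conditionally_complete_lattice}) set"
    and T :: "'a \<Rightarrow> 'b"
  assumes A: "A \<subseteq> U_plus" "A \<noteq> {}" "increasing_set A" and T: "T \<in> U_plus"
  shows "pi_A A T = (\<lambda>x. Sup ((\<lambda>i. Uinf T (\<lambda>x. nmul (fst i) (snd i x)) x) ` (UNIV \<times> A)))"
proof -
  let ?I = "(UNIV::nat set) \<times> A"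
  define \<Phi> where "\<Phi> = (\<lambda>i x. Uinf T (\<lambda>x. nmul (fst i) (snd i x)) x)"
  define P where "P = (\<lambda>x. Sup ((\<lambda>i. \<Phi> i x) ` ?I))"
  define t where "t = Abs_ury T"
  define dd where "dd = (\<lambda>i. inf t (nmul (fst i) (Abs_ury (snd i))))"
  have uT: "uryson T" by (rule Uplus_D(1)[OF T])
  have uA: "uryson S" if "S \<in> A" for S using A(1) that Uplus_D(1) by blast
  have Rt: "Rep_ury t = T" unfolding t_def by (rule Rep_Abs[OF uT])
  have t0: "0 \<le> t" unfolding t_def by (rule Uplus_ge0[OF T])
  have s0: "0 \<le> Abs_ury S" if "S \<in> A" for S using A(1) that Uplus_ge0 by blast
  have Rdd: "Rep_ury (dd i) = \<Phi> i" if "i \<in> ?I" for i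
  proof -
    have "snd i \<in> A" using that by auto
    then have "Rep_ury (Abs_ury (snd i)) = snd i" by (rule Rep_Abs[OF uA])
    then have "Rep_ury (nmul (fst i) (Abs_ury (snd i))) = (\<lambda>x. nmul (fst i) (snd i x))"
      by (simp add: fun_eq_iff Rep_nmul)
    then show ?thesis unfolding dd_def \<Phi>_def by (simp add: inf_ury.rep_eq Rt)
  qed
  have dd0: "0 \<le> dd i" if "i \<in> ?I" for i
    unfolding dd_def using t0 nmul_nonneg[OF s0] that by (simp add: mem_Times_iff)
  have ddt: "dd i \<le> t" for i unfolding dd_def by simp
  have ddn: "dd i \<le> nmul (fst i) (Abs_ury (snd i))" for i unfolding dd_def by simp
  have dir: "\<exists>k\<in>?I. dd i \<le> dd k \<and> dd j \<le> dd k" if ij0: "i \<in> ?I" "j \<in> ?I" for i j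
  proof -
    obtain n1 S1 where i1: "i = (n1, S1)" by (cases i)
    obtain n2 S2 where j1: "j = (n2, S2)" by (cases j)
    have ij: "i = (n1, S1)" "j = (n2, S2)" "S1 \<in> A" "S2 \<in> A" using ij0 i1 j1 by auto
    obtain Q where Q: "Q \<in> A" "U_le S1 Q" "U_le S2 Q" using A(3) ij(3,4) unfolding increasing_set_def by blast
    have le: "Abs_ury S \<le> Abs_ury Q" if "S \<in> A" "U_le S Q" for S
      using that Q(1) by (simp add: le_ury_iff Rep_Abs uA U_le_iff)
    let ?m = "max n1 n2"
    have "nmul n (Abs_ury S) \<le> nmul ?m (Abs_ury Q)" if "S \<in> A" "U_le S Q" "n \<le> ?m" for S n
    proof -
      have "nmul n (Abs_ury S) \<le> nmul n (Abs_ury Q)" by (rule nmul_mono[OF le[OF that(1,2)]])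
      also have "\<dots> \<le> nmul ?m (Abs_ury Q)" by (rule nmul_mono_n[OF s0[OF Q(1)] that(3)])
      finally show ?thesis .
    qed
    then have "nmul n1 (Abs_ury S1) \<le> nmul ?m (Abs_ury Q)" "nmul n2 (Abs_ury S2) \<le> nmul ?m (Abs_ury Q)"
      using ij Q by auto
    then have "dd i \<le> dd (?m, Q)" "dd j \<le> dd (?m, Q)" unfolding dd_def using ij
      by (auto intro: le_infI2 order_trans[OF inf_le2])
    moreover have "(?m, Q) \<in> ?I" using Q by simp
    ultimately show ?thesis by blast
  qed
  have Phi_le: "\<Phi> i x \<le> T x" if "i \<in> ?I" for i x using ddt[of i] Rdd[OF that] Rt by (simp add: le_ury_iff)
  have Phi_ge0: "0 \<le> \<Phi> i x" if "i \<in> ?I" for i x using dd0[OF that] Rdd[OF that] by (simp add: le_ury_iff Rep_zero)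
  have bdd: "bdd_above ((\<lambda>i. \<Phi> i x) ` ?I)" for x using Phi_le by (auto intro!: bdd_aboveI[of _ "T x"])
  have Ine: "?I \<noteq> {}" using A(2) by simp
  have P_ge: "\<Phi> i x \<le> P x" if "i \<in> ?I" for i x unfolding P_def by (rule cSup_upper[OF imageI[OF that] bdd])
  have P_le: "P x \<le> T x" for x unfolding P_def by (rule cSup_least) (use Ine Phi_le in auto)
  have P_ge0: "0 \<le> P x" for x
  proof -
    obtain S where "S \<in> A" using A(2) by blast
    then have "(0::nat, S) \<in> ?I" by simp
    then show ?thesis using Phi_ge0 P_ge order_trans by blast
  qed
  have uP: "uryson P"
    unfolding uryson_def
  proof (intro conjI)
    show "orth_additive P" unfolding orth_additive_def
    proof (intro allI impI)
      fix u v :: 'a assume uv: "vl_disj u v"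
      have "\<Phi> i (u + v) = \<Phi> i u + \<Phi> i v" if "i \<in> ?I" for i
        using ury_Rep[of "dd i"] uv Rdd[OF that] unfolding uryson_def orth_additive_def by metis
      then have "P (u + v) = Sup ((\<lambda>i. \<Phi> i u + \<Phi> i v) ` ?I)" unfolding P_def
        by (simp cong: image_cong)
      also have "\<dots> = P u + P v" unfolding P_def
      proof (rule directed_Sup_add[OF Ine bdd bdd])
        fix i j assume "i \<in> ?I" "j \<in> ?I"
        then obtain k where k: "k \<in> ?I" "dd i \<le> dd k" "dd j \<le> dd k" using dir by blast
        then show "\<exists>k\<in>?I. \<Phi> i u \<le> \<Phi> k u \<and> \<Phi> j v \<le> \<Phi> k v"
          using Rdd \<open>i \<in> ?I\<close> \<open>j \<in> ?I\<close> by (auto simp: le_ury_iff)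
      qed
      finally show "P (u + v) = P u + P v" .
    qed
    show "order_bounded_op P" unfolding order_bounded_op_def
    proof (intro allI impI)
      fix X :: "'a set" assume "order_bounded_set X"
      then have "order_bounded_set (T ` X)" using uT by (simp add: uryson_def order_bounded_op_def)
      then obtain lo hi where "T ` X \<subseteq> {lo..hi}" unfolding order_bounded_set_def by blast
      then have "P ` X \<subseteq> {0..hi}"
      proof (intro image_subsetI)
        fix x assume "T ` X \<subseteq> {lo..hi}" "x \<in> X"
        then have "T x \<le> hi" by auto
        then show "P x \<in> {0..hi}" using P_ge0[of x] P_le[of x] by simp
      qed
      then show "order_bounded_set (P ` X)" unfolding order_bounded_set_def by blast
    qed
  qed
  define p where "p = Abs_ury P"
  have Rp: "Rep_ury p = P" unfolding p_def by (rule Rep_Abs[OF uP])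
  have lub: "is_lub_of (dd ` ?I) p"
    unfolding is_lub_of_def
  proof (intro conjI ballI allI impI)
    fix d assume "d \<in> dd ` ?I"
    then obtain i where i: "i \<in> ?I" "d = dd i" by blast
    show "d \<le> p" using i P_ge Rdd Rp by (simp add: le_ury_iff)
  next
    fix u assume u: "\<forall>d\<in>dd ` ?I. d \<le> u"
    have "P x \<le> Rep_ury u x" for x unfolding P_def
    proof (rule cSup_least)
      show "(\<lambda>i. \<Phi> i x) ` ?I \<noteq> {}" using Ine by simp
      fix w assume "w \<in> (\<lambda>i. \<Phi> i x) ` ?I"
      then obtain i where i: "i \<in> ?I" "w = \<Phi> i x" by blast
      then have "dd i \<le> u" using u by blast
      then show "w \<le> Rep_ury u x" using i Rdd by (simp add: le_ury_iff)
    qed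
    then show "p \<le> u" using Rp by (simp add: le_ury_iff)
  qed
  have p0: "0 \<le> p" using P_ge0 Rp by (simp add: le_ury_iff Rep_zero)
  have pt: "p \<le> t" using P_le Rp Rt by (simp add: le_ury_iff)
  have PBG: "P \<in> U_band_gen A"
    unfolding U_band_gen_def U_dcompl_def
  proof (intro CollectI conjI ballI)
    show "uryson P" by (rule uP)
    fix Y assume "Y \<in> {R. uryson R \<and> (\<forall>S\<in>A. U_disj S R)}"
    then have uY: "uryson Y" and YA: "\<forall>S\<in>A. U_disj S Y" by auto
    define y where "y = Abs_ury Y"
    have sy: "vl_disj (Abs_ury S) y" if "S \<in> A" for S using YA that uA uY U_disj_iff y_def by blast
    have z: "inf (vl_abs y) d = 0" if "d \<in> dd ` ?I" for d
    proof -
      obtain n S where i: "S \<in> A" "d = dd (n, S)" using \<open>d \<in> dd ` ?I\<close> by auto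
      have "vl_disj y (Abs_ury S)" using sy[OF i(1)] disj_sym by blast
      then have "vl_disj y (nmul n (Abs_ury S))" by (rule disj_nmul)
      moreover have "vl_abs d \<le> vl_abs (nmul n (Abs_ury S))"
        using i dd0[of "(n, S)"] ddn[of "(n, S)"] nmul_nonneg[OF s0[OF i(1)], of n] by (simp add: abs_pos)
      ultimately have "vl_disj y d" by (rule disj_solid)
      then show ?thesis using i dd0[of "(n, S)"] by (simp add: vl_disj_def abs_pos)
    qed
    have l2: "is_lub_of (inf (vl_abs y) ` dd ` ?I) (inf (vl_abs y) p)"
      by (rule lub_inf_distrib[OF lub]) (use Ine in simp)
    have "inf (vl_abs y) ` dd ` ?I = {0}" using z Ine by auto
    moreover have "is_lub_of {0} 0" by (simp add: is_lub_of_def)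
    ultimately have "inf (vl_abs y) p = 0" using l2 lub_unique by metis
    then have "vl_disj y p" using p0 by (simp add: vl_disj_def abs_pos)
    then show "U_disj Y P" using U_disj_iff[OF uY uP] y_def p_def by simp
  qed
  have RTP: "Rep_ury (t - p) = (\<lambda>x. T x - P x)" by (simp add: fun_eq_iff Rep_minus Rt Rp)
  have RA: "(\<lambda>x. T x - P x) \<in> U_dcompl A"
    unfolding U_dcompl_def
  proof (intro CollectI conjI ballI)
    show "uryson (\<lambda>x. T x - P x)" by (rule ury_diff[OF uT uP])
    fix S assume S: "S \<in> A"
    define s where "s = Abs_ury S"
    have ss0: "0 \<le> s" unfolding s_def by (rule s0[OF S])
    let ?r = "t - p"
    have r0: "0 \<le> ?r" using pt by simp
    let ?q = "inf s ?r"
    have q0: "0 \<le> ?q" using ss0 r0 by simp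
    have "nmul n ?q \<le> t" for n
    proof -
      have "dd (n, S) \<le> p" using lub S unfolding is_lub_of_def by auto
      then have "inf t (nmul n s) \<le> p" unfolding dd_def s_def by simp
      then have "?r \<le> t - inf t (nmul n s)" by (rule diff_left_mono)
      also have "\<dots> = pp (t - nmul n s)" by (rule diff_inf_pp)
      finally have rl: "?r \<le> pp (t - nmul n s)" .
      have "?q \<le> inf (pp (t - nmul n s)) s"
        by (rule le_infI[OF order_trans[OF inf_le2 rl] inf_le1])
      then have "nmul n ?q \<le> nmul n (inf (pp (t - nmul n s)) s)" by (rule nmul_mono)
      also have "\<dots> \<le> t" by (rule L2[OF t0 ss0])
      finally show ?thesis .
    qed
    then have "nmul n (Rep_ury ?q x) \<le> T x" for n x using Rt by (simp add: le_ury_iff Rep_nmul)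
    moreover have "0 \<le> Rep_ury ?q x" for x using q0 by (simp add: le_ury_iff Rep_zero)
    ultimately have "Rep_ury ?q x = 0" for x using archimedean by blast
    then have "Rep_ury ?q = Rep_ury 0" by (simp add: fun_eq_iff Rep_zero)
    then have "?q = 0" by (simp add: Rep_ury_inject)
    then have "vl_disj s ?r" using ss0 r0 by (simp add: vl_disj_def abs_pos)
    then show "U_disj S (\<lambda>x. T x - P x)"
      using U_disj_Rep[of s ?r] RTP unfolding s_def using Rep_Abs[OF uA[OF S]] by simp
  qed
  have RBG: "(\<lambda>x. T x - P x) \<in> U_dcompl (U_band_gen A)"
    unfolding U_dcompl_def
  proof (intro CollectI conjI ballI)
    show "uryson (\<lambda>x. T x - P x)" by (rule ury_diff[OF uT uP])
    fix Z assume "Z \<in> U_band_gen A"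
    then have uZ: "uryson Z" and "U_disj (\<lambda>x. T x - P x) Z" using RA unfolding U_band_gen_def U_dcompl_def by auto
    then show "U_disj Z (\<lambda>x. T x - P x)"
      using U_disj_iff[OF uZ ury_diff[OF uT uP]] U_disj_iff[OF ury_diff[OF uT uP] uZ] disj_sym by blast
  qed
  have "pi_A A T = P" unfolding pi_A_def
  proof (rule the_equality)
    show "P \<in> U_band_gen A \<and> (\<lambda>x. T x - P x) \<in> U_dcompl (U_band_gen A)" using PBG RBG by simp
    fix Q assume Q: "Q \<in> U_band_gen A \<and> (\<lambda>x. T x - Q x) \<in> U_dcompl (U_band_gen A)"
    have uQ: "uryson Q" using Q unfolding U_band_gen_def U_dcompl_def by simp
    define q where "q = Abs_ury Q"
    have Rq: "Rep_ury q = Q" unfolding q_def by (rule Rep_Abs[OF uQ])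
    have RZ: "Rep_ury (q - p) = (\<lambda>x. Q x - P x)" by (simp add: fun_eq_iff Rep_minus Rq Rp)
    have ZBG: "(\<lambda>x. Q x - P x) \<in> U_band_gen A"
      unfolding U_band_gen_def U_dcompl_def
    proof (intro CollectI conjI ballI)
      show "uryson (\<lambda>x. Q x - P x)" by (rule ury_diff[OF uQ uP])
      fix Y assume Y: "Y \<in> {R. uryson R \<and> (\<forall>S\<in>A. U_disj S R)}"
      then have uY: "uryson Y" by simp
      have "U_disj Y Q" using Q Y unfolding U_band_gen_def U_dcompl_def by blast
      moreover have "U_disj Y P" using PBG Y unfolding U_band_gen_def U_dcompl_def by blast
      ultimately have "vl_disj (Abs_ury Y) q" "vl_disj (Abs_ury Y) p"
        using U_disj_iff[OF uY uQ] U_disj_iff[OF uY uP] q_def p_def by simp_all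
      then have "vl_disj (Abs_ury Y) (q - p)" by (rule disj_diff)
      then show "U_disj Y (\<lambda>x. Q x - P x)" using U_disj_Rep[of "Abs_ury Y" "q - p"] RZ Rep_Abs[OF uY]
        by simp
    qed
    have RTQ: "Rep_ury (t - q) = (\<lambda>x. T x - Q x)" by (simp add: fun_eq_iff Rep_minus Rq Rt)
    have "U_disj (\<lambda>x. Q x - P x) (\<lambda>x. T x - Q x)" using Q ZBG unfolding U_dcompl_def by blast
    then have d1: "vl_disj (q - p) (t - q)" using U_disj_Rep[of "q - p" "t - q"] RZ RTQ by simp
    have "U_disj (\<lambda>x. Q x - P x) (\<lambda>x. T x - P x)" using RBG ZBG unfolding U_dcompl_def by blast
    then have d2: "vl_disj (q - p) (t - p)" using U_disj_Rep[of "q - p" "t - p"] RZ RTP by simp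
    have "vl_disj (q - p) ((t - p) - (t - q))" by (rule disj_diff[OF d2 d1])
    then have "vl_disj (q - p) (q - p)" by simp
    then have "q - p = 0" by (rule disj_self)
    then have "q = p" by simp
    then show "Q = P" using Rq Rp by simp
  qed
  then show ?thesis unfolding P_def \<Phi>_def .
qed


lemma ury_nmulf: "uryson S \<Longrightarrow> uryson (\<lambda>x. nmul n (S x))"
proof (induction n)
  case 0 then show ?case using ury_zero by simp
next
  case (Suc n) then show ?case using ury_add[OF Suc.prems Suc.IH] by simp
qed

theorem mainTheorem2:
  fixes A :: "('a::{ordered_real_vector,lattice} \<Rightarrow> 'b::{ordered_real_vector,conditionally_complete_lattice}) set"
    and T :: "'a \<Rightarrow> 'b" and e :: 'a
  assumes "A \<subseteq> U_plus" and "A \<noteq> {}" and "increasing_set A" and "T \<in> U_plus"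
  shows "sigma_A A T e =
    (INF (\<epsilon>, S) \<in> {(\<epsilon>, S). \<epsilon> > (0::real) \<and> S \<in> A}.
       Sup {\<rho> (T f) | f \<rho>. f \<in> fragments e \<and> band_projection \<rho> \<and> \<rho> (S f) \<le> \<epsilon> *\<^sub>R S e})"
proof -
  let ?I = "(UNIV::nat set) \<times> A"
  let ?\<Phi> = "\<lambda>i x. Uinf T (\<lambda>x. nmul (fst i) (snd i x)) x"
  let ?K = "{(\<epsilon>, S). \<epsilon> > (0::real) \<and> S \<in> A}"
  let ?Vv = "\<lambda>i. Vf T (snd i) e (fst i)"
  let ?Mv = "\<lambda>(\<epsilon>, S). Sup (Mset T S e \<epsilon>)"
  have T: "T \<in> U_plus" by (rule assms(4))
  have uT: "uryson T" by (rule Uplus_D(1)[OF T])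
  have SA: "S \<in> U_plus" if "S \<in> A" for S using assms(1) that by blast
  have uA: "uryson S" if "S \<in> A" for S using Uplus_D(1)[OF SA[OF that]] .
  have pi: "pi_A A T = (\<lambda>x. Sup ((\<lambda>i. ?\<Phi> i x) ` ?I))" by (rule pi_A_char[OF assms])
  have sig: "sigma_A A T e = T e - Sup ((\<lambda>i. ?\<Phi> i e) ` ?I)" unfolding sigma_A_def pi by simp
  have Ine: "?I \<noteq> {}" using assms(2) by simp
  have bddP: "bdd_above ((\<lambda>i. ?\<Phi> i e) ` ?I)"
  proof (rule bdd_aboveI[of _ "T e"])
    fix w assume "w \<in> (\<lambda>i. ?\<Phi> i e) ` ?I"
    then obtain n S where i: "S \<in> A" "w = ?\<Phi> (n, S) e" by auto
    then show "w \<le> T e" using Uinf_le1[OF uT ury_nmulf[OF uA[OF i(1)]]] by simp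
  qed
  have "T e - Sup ((\<lambda>i. ?\<Phi> i e) ` ?I) = Inf ((\<lambda>z. T e - z) ` (\<lambda>i. ?\<Phi> i e) ` ?I)"
    by (rule minus_Sup) (use Ine bddP in simp_all)
  also have "\<dots> = Inf ((\<lambda>i. T e - ?\<Phi> i e) ` ?I)" by (simp only: image_image)
  also have "(\<lambda>i. T e - ?\<Phi> i e) ` ?I = ?Vv ` ?I"
  proof (rule image_cong[OF refl])
    fix i assume "i \<in> ?I"
    then have "snd i \<in> A" by auto
    then show "T e - ?\<Phi> i e = ?Vv i"
      unfolding Vf_def by (rule T_minus_Uinf[OF uT ury_nmulf[OF uA]])
  qed
  finally have sig2: "sigma_A A T e = Inf (?Vv ` ?I)" using sig by simp
  obtain S0 where S0: "S0 \<in> A" using assms(2) by blast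
  have "(1::real, S0) \<in> ?K" using S0 by simp
  then have Kne: "?Mv ` ?K \<noteq> {}" by blast
  have bddM: "bdd_below (?Mv ` ?K)"
    by (rule bdd_belowI[of _ 0]) (auto intro: Mf_ge0[OF T SA])
  have bddV: "bdd_below (?Vv ` ?I)"
    by (rule bdd_belowI[of _ 0]) (auto intro: Vf_ge0[OF T SA])
  have "Inf (?Vv ` ?I) = Inf (?Mv ` ?K)"
  proof (rule order.antisym)
    show "Inf (?Mv ` ?K) \<le> Inf (?Vv ` ?I)"
    proof (rule cInf_greatest)
      show "?Vv ` ?I \<noteq> {}" using Ine by simp
      fix x assume "x \<in> ?Vv ` ?I"
      then obtain n S where S: "S \<in> A" and x: "x = Vf T S e n" by auto
      have "Inf (?Mv ` ?K) - Vf T S e n \<le> 0"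
      proof (rule small[OF Uplus_D(2)[OF SA[OF S]]])
        fix \<epsilon> :: real assume ep: "0 < \<epsilon>"
        have "(\<epsilon>, S) \<in> ?K" using ep S by simp
        then have "Inf (?Mv ` ?K) \<le> ?Mv (\<epsilon>, S)" by (rule cInf_lower[OF imageI bddM])
        also have "\<dots> \<le> Vf T S e n + nmul n (\<epsilon> *\<^sub>R S e)" using M_le[OF T SA[OF S]] ep by simp
        finally show "Inf (?Mv ` ?K) - Vf T S e n \<le> nmul n (\<epsilon> *\<^sub>R S e)" by (simp add: diff_le_eq add.commute)
      qed
      then show "Inf (?Mv ` ?K) \<le> x" using x by simp
    qed
    show "Inf (?Vv ` ?I) \<le> Inf (?Mv ` ?K)"
    proof (rule cInf_greatest[OF Kne])
      fix x assume "x \<in> ?Mv ` ?K"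
      then obtain \<epsilon> S where S: "S \<in> A" and ep: "0 < \<epsilon>" and x: "x = Sup (Mset T S e \<epsilon>)" by auto
      have b0: "0 \<le> \<epsilon> *\<^sub>R S e" using ep Uplus_D(2)[OF SA[OF S]] by (simp add: scaleR_nonneg_nonneg)
      have "Inf (?Vv ` ?I) - Sup (Mset T S e \<epsilon>) \<le> 0"
      proof (rule arch2[OF Uplus_D(2)[OF T] b0])
        fix n
        have "(n, S) \<in> ?I" using S by simp
        then have "Inf (?Vv ` ?I) \<le> ?Vv (n, S)" by (rule cInf_lower[OF imageI bddV])
        also have "\<dots> \<le> Sup (Mset T S e \<epsilon>) + hp (\<epsilon> *\<^sub>R S e) (pp (T e - nmul n (\<epsilon> *\<^sub>R S e)))"
          using V_le[OF T SA[OF S] ep] by simp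
        finally show "Inf (?Vv ` ?I) - Sup (Mset T S e \<epsilon>) \<le> hp (\<epsilon> *\<^sub>R S e) (pp (T e - nmul n (\<epsilon> *\<^sub>R S e)))"
          by (simp add: diff_le_eq add.commute)
      qed
      then show "Inf (?Vv ` ?I) \<le> x" using x by simp
    qed
  qed
  then show ?thesis unfolding sig2 Mset_def .
qed


end
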